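(* Let $\mathfrak g$ be a real Lie algebra of dimension $4$ endowed with a generalized complex structure $(J,R,\sigma)$ of type $1$. Put $\mathfrak h=\operatorname{Im}R$ and $\mathfrak p=\ker\sigma$. Then $\mathfrak g=\mathfrak h\oplus\mathfrak p$. Moreover, for any basis $(e_1,e_2)$ of $\mathfrak h$ and any nonzero $e_3\in\mathfrak p$, setting $e_4=Je_3$, $(e_1,e_2,e_3,e_4)$ is a basis of $\mathfrak g$ and: 1. $J=\lambda(E_{11}+E_{22})+E_{34}-E_{43}$, $R=a\,e_{12}^{\#}$ and $\sigma=a^{-1}(1+\lambda^2)e^{12}_{\#}$ for some $\lambda\in\mathbb R$ and $a\neq0$. 2. There are real numbers $a_1,a_2,b_1,\dots,b_4,x_1,x_2,y_1,y_2,p_1,p_2,q_1,q_2,r_1,r_2$ such that the Lie brackets are $[e_1,e_2]=a_1e_1+a_2e_2$, $[e_3,e_4]=b_1e_1+b_2e_2+b_3e_3+b_4e_4$, $[e_1,e_3]=x_1e_3-y_1e_4-p_1e_1-r_1e_2$, $[e_1,e_4]=y_1e_3+x_1e_4-p_2e_1-r_2e_2$, $[e_2,e_3]=x_2e_3-y_2e_4-q_1e_1+p_1e_2$, $[e_2,e_4]=y_2e_3+x_2e_4-q_2e_1+p_2e_2$. 3. For brackets of the form in item 2, the Jacobi identity is equivalent to the system $a_1x_1+a_2x_2=0$, $a_1y_1+a_2y_2=0$, $a_1p_1+a_2q_1-p_1x_2+p_2y_2+q_1x_1-q_2y_1=0$, $a_1r_1-a_2p_1-p_1x_1+p_2y_1-r_1x_2+r_2y_2=0$,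 $a_1p_2+a_2q_2-p_1y_2-p_2x_2+q_1y_1+q_2x_1=0$, $a_1r_2-a_2p_2-p_1y_1-p_2x_1-r_1y_2-r_2x_2=0$, $a_1b_2-2b_1x_1-b_3p_1-b_4p_2+q_1r_2-q_2r_1=0$, $a_2b_2-2b_2x_1-b_3r_1-b_4r_2-2p_1r_2+2p_2r_1=0$, $-b_3x_1+b_4y_1+p_1y_1-p_2x_1+r_1y_2-r_2x_2=0$, $-b_3y_1-b_4x_1+p_1x_1+p_2y_1+r_1x_2+r_2y_2=0$, $-a_1b_1-2b_1x_2-b_3q_1-b_4q_2+2p_1q_2-2p_2q_1=0$, $-a_2b_1-2b_2x_2+b_3p_1+b_4p_2-q_1r_2+q_2r_1=0$, $-b_3x_2+b_4y_2-p_1y_2+p_2x_2+q_1y_1-q_2x_1=0$, $-b_3y_2-b_4x_2-p_1x_2-p_2y_2+q_1x_1+q_2y_1=0$.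
   Context: Let $\mathfrak g$ be a real finite-dimensional Lie algebra, $\Phi(\mathfrak g)=\mathfrak g\oplus\mathfrak g^*$ with the neutral pairing $\langle u+\alpha,v+\beta\rangle=\tfrac12(\alpha(v)+\beta(u))$ and the bracket $[u+\alpha,v+\beta]=[u,v]+\mathrm{ad}_u^t\beta-\mathrm{ad}_v^t\alpha$, where $(\mathrm{ad}_u^t\alpha)(v)=-\alpha([u,v])$. A generalized complex structure on $\mathfrak g$ is an endomorphism $K$ of $\Phi(\mathfrak g)$ with $K^2=-\mathrm{Id}$, $\langle Ka,b\rangle+\langle a,Kb\rangle=0$ for all $a,b$, and vanishing Nijenhuis torsion $N_K(a,b)=[Ka,Kb]-K[Ka,b]-K[a,Kb]+K^2[a,b]$. Writing $K=\begin{pmatrix}J&R\\ \sigma&-J^*\end{pmatrix}$ with $J\in\mathrm{End}(\mathfrak g)$ and skew-symmetric $R:\mathfrak g^*\to\mathfrak g$, $\sigma:\mathfrak g\to\mathfrak g^*$, the triple $(J,R,\sigma)$ is also called a generalized complex structure on $\mathfrak g$. Its type is $\tfrac12\dim(\operatorname{Im}R)^0$ (annihilator); for $\dim\mathfrak g=4$, type $0$ means $R$ invertible, type $1$ means $\operatorname{rank}R=2$, type $2$ means $R=0$. Notation: for a basis $(e_i)$ with dual basis $(e^i)$, $E_{ij}$ is the endomorphism sending $e_j$ to $e_i$ and vanishing on $e_k$, $k\ne j$; $e_{ij}=e_i\wedge e_j$, $e^{ij}=e^i\wedge e^j$; for $\pi\in\wedge^2\mathfrak g$, $\pi^\#:\mathfrak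 g^*\to\mathfrak g$ is defined by $\beta(\pi^\#(\alpha))=\pi(\alpha,\beta)$; for $\omega\in\wedge^2\mathfrak g^*$, $\omega_\#:\mathfrak g\to\mathfrak g^*$ is $u\mapsto i_u\omega$. Thus $e_{12}^\#=(e_1\wedge e_2)^\#$ and $e^{12}_\#=(e^1\wedge e^2)_\#$. *)

theory Defs
  imports "HOL-Analysis.Analysis"
begin

definition lie_algebra :: "('a::real_vector \<Rightarrow> 'a \<Rightarrow> 'a) \<Rightarrow> bool" where
  "lie_algebra br \<longleftrightarrow> bilinear br \<and> (\<forall>u. br u u = 0) \<and>
     (\<forall>u v w. br u (br v w) + br v (br w u) + br w (br u v) = 0)"

type_synonym 'a phi = "'a \<times> ('a \<Rightarrow> real)"

definition in_Phi :: "'a::real_vector phi \<Rightarrow> bool" where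
  "in_Phi p \<longleftrightarrow> linear (snd p)"

definition phi_add :: "'a::real_vector phi \<Rightarrow> 'a phi \<Rightarrow> 'a phi" where
  "phi_add p q = (fst p + fst q, \<lambda>w. snd p w + snd q w)"

definition phi_scale :: "real \<Rightarrow> 'a::real_vector phi \<Rightarrow> 'a phi" where
  "phi_scale c p = (c *\<^sub>R fst p, \<lambda>w. c * snd p w)"

definition phi_neg :: "'a::real_vector phi \<Rightarrow> 'a phi" where
  "phi_neg p = phi_scale (-1) p"

definition phi_zero :: "'a::real_vector phi" where
  "phi_zero = (0, \<lambda>w. 0)"

definition phi_pair :: "'a::real_vector phi \<Rightarrow> 'a phi \<Rightarrow> real" where
  "phi_pair p q = (snd p (fst q) + snd q (fst p)) / 2"

definition ad_t :: "('a::real_vector \<Rightarrow> 'a \<Rightarrow> 'a) \<Rightarrow> 'a \<Rightarrow> ('a \<Rightarrow> real) \<Rightarrow> ('a \<Rightarrow> real)" where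
  "ad_t br u \<beta> = (\<lambda>v. - \<beta> (br u v))"

definition phi_br :: "('a::real_vector \<Rightarrow> 'a \<Rightarrow> 'a) \<Rightarrow> 'a phi \<Rightarrow> 'a phi \<Rightarrow> 'a phi" where
  "phi_br br p q = (br (fst p) (fst q), \<lambda>w. ad_t br (fst p) (snd q) w - ad_t br (fst q) (snd p) w)"

definition nijenhuis ::
  "('a::real_vector \<Rightarrow> 'a \<Rightarrow> 'a) \<Rightarrow> ('a phi \<Rightarrow> 'a phi) \<Rightarrow> 'a phi \<Rightarrow> 'a phi \<Rightarrow> 'a phi" where
  "nijenhuis br K a b =
     phi_add (phi_add (phi_br br (K a) (K b)) (phi_neg (K (phi_br br (K a) b))))
             (phi_add (phi_neg (K (phi_br br a (K b)))) (K (K (phi_br br a b))))"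

definition gen_complex_structure ::
  "('a::real_vector \<Rightarrow> 'a \<Rightarrow> 'a) \<Rightarrow> ('a phi \<Rightarrow> 'a phi) \<Rightarrow> bool" where
  "gen_complex_structure br K \<longleftrightarrow>
     (\<forall>a. in_Phi a \<longrightarrow> in_Phi (K a)) \<and>
     (\<forall>a b. in_Phi a \<longrightarrow> in_Phi b \<longrightarrow> K (phi_add a b) = phi_add (K a) (K b)) \<and>
     (\<forall>c a. in_Phi a \<longrightarrow> K (phi_scale c a) = phi_scale c (K a)) \<and>
     (\<forall>a. in_Phi a \<longrightarrow> K (K a) = phi_neg a) \<and>
     (\<forall>a b. in_Phi a \<longrightarrow> in_Phi b \<longrightarrow> phi_pair (K a) b + phi_pair a (K b) = 0) \<and>
     (\<forall>a b. in_Phi a \<longrightarrow> in_Phi b \<longrightarrow> nijenhuis br K a b = phi_zero)"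

text \<open>K = [[J, R], [sigma, -J^*]], where (J^* alpha)(v) = alpha(J v).\<close>
definition gc_K ::
  "('a::real_vector \<Rightarrow> 'a) \<Rightarrow> (('a \<Rightarrow> real) \<Rightarrow> 'a) \<Rightarrow> ('a \<Rightarrow> ('a \<Rightarrow> real)) \<Rightarrow> 'a phi \<Rightarrow> 'a phi" where
  "gc_K J R \<sigma> p = (J (fst p) + R (snd p), \<lambda>w. \<sigma> (fst p) w - snd p (J w))"

definition gen_complex_triple ::
  "('a::real_vector \<Rightarrow> 'a \<Rightarrow> 'a) \<Rightarrow> ('a \<Rightarrow> 'a) \<Rightarrow> (('a \<Rightarrow> real) \<Rightarrow> 'a) \<Rightarrow> ('a \<Rightarrow> ('a \<Rightarrow> real)) \<Rightarrow> bool" where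
  "gen_complex_triple br J R \<sigma> \<longleftrightarrow> gen_complex_structure br (gc_K J R \<sigma>)"

text \<open>Im R (R restricted to g^*, the linear functionals) and ker sigma.\<close>
definition imR :: "(('a::real_vector \<Rightarrow> real) \<Rightarrow> 'a) \<Rightarrow> 'a set" where
  "imR R = R ` {\<alpha>. linear \<alpha>}"

definition ker_sigma :: "('a::real_vector \<Rightarrow> ('a \<Rightarrow> real)) \<Rightarrow> 'a set" where
  "ker_sigma \<sigma> = {u. \<sigma> u = (\<lambda>w. 0)}"

text \<open>Type of a generalized complex structure on a 4-dimensional Lie algebra:
  type 1 means rank R = 2 (equivalently (1/2) dim (Im R)^0 = 1).\<close>
definition gc_type1 :: "(('a::euclidean_space \<Rightarrow> real) \<Rightarrow> 'a) \<Rightarrow> bool" where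
  "gc_type1 R \<longleftrightarrow> dim (imR R) = 2"

text \<open>(u \<and> v)^#: g^* \<rightarrow> g, with beta((u\<and>v)^#(alpha)) = (u\<and>v)(alpha,beta)
  = alpha(u) beta(v) - alpha(v) beta(u); hence (u\<and>v)^#(alpha) = alpha(u) v - alpha(v) u.\<close>
definition wedge_sharp :: "'a::real_vector \<Rightarrow> 'a \<Rightarrow> ('a \<Rightarrow> real) \<Rightarrow> 'a" where
  "wedge_sharp u v \<alpha> = \<alpha> u *\<^sub>R v - \<alpha> v *\<^sub>R u"

text \<open>(f \<and> g)_#: g \<rightarrow> g^*, u \<mapsto> i_u (f\<and>g) = (w \<mapsto> f(u) g(w) - f(w) g(u)).\<close>
definition wedge_flat :: "('a \<Rightarrow> real) \<Rightarrow> ('a \<Rightarrow> real) \<Rightarrow> 'a \<Rightarrow> ('a \<Rightarrow> real)" where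
  "wedge_flat f g u = (\<lambda>w. f u * g w - f w * g u)"

text \<open>Dual basis: dual_basis es i is the i-th dual covector (0-based) of the basis list es.\<close>
definition dual_basis :: "'a::real_vector list \<Rightarrow> nat \<Rightarrow> ('a \<Rightarrow> real)" where
  "dual_basis es i = (THE f. linear f \<and> (\<forall>j<length es. f (es ! j) = (if j = i then 1 else 0)))"

definition is_basis_of :: "'a::real_vector list \<Rightarrow> 'a set \<Rightarrow> bool" where
  "is_basis_of es S \<longleftrightarrow> set es \<subseteq> S \<and> span (set es) = S \<and>
     (\<forall>c. (\<Sum>i<length es. c i *\<^sub>R es ! i) = 0 \<longrightarrow> (\<forall>i<length es. c i = 0))"

definition bracket_form ::
  "('a::real_vector \<Rightarrow> 'a \<Rightarrow> 'a) \<Rightarrow> 'a \<Rightarrow> 'a \<Rightarrow> 'a \<Rightarrow> 'a \<Rightarrow>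
   real \<Rightarrow> real \<Rightarrow> real \<Rightarrow> real \<Rightarrow> real \<Rightarrow> real \<Rightarrow> real \<Rightarrow> real \<Rightarrow> real \<Rightarrow> real \<Rightarrow>
   real \<Rightarrow> real \<Rightarrow> real \<Rightarrow> real \<Rightarrow> real \<Rightarrow> real \<Rightarrow> bool" where
  "bracket_form br e1 e2 e3 e4 a1 a2 b1 b2 b3 b4 x1 x2 y1 y2 p1 p2 q1 q2 r1 r2 \<longleftrightarrow>
     br e1 e2 = a1 *\<^sub>R e1 + a2 *\<^sub>R e2 \<and>
     br e3 e4 = b1 *\<^sub>R e1 + b2 *\<^sub>R e2 + b3 *\<^sub>R e3 + b4 *\<^sub>R e4 \<and>
     br e1 e3 = x1 *\<^sub>R e3 - y1 *\<^sub>R e4 - p1 *\<^sub>R e1 - r1 *\<^sub>R e2 \<and>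
     br e1 e4 = y1 *\<^sub>R e3 + x1 *\<^sub>R e4 - p2 *\<^sub>R e1 - r2 *\<^sub>R e2 \<and>
     br e2 e3 = x2 *\<^sub>R e3 - y2 *\<^sub>R e4 - q1 *\<^sub>R e1 + p1 *\<^sub>R e2 \<and>
     br e2 e4 = y2 *\<^sub>R e3 + x2 *\<^sub>R e4 - q2 *\<^sub>R e1 + p2 *\<^sub>R e2"

definition jacobi_system ::
  "real \<Rightarrow> real \<Rightarrow> real \<Rightarrow> real \<Rightarrow> real \<Rightarrow> real \<Rightarrow> real \<Rightarrow> real \<Rightarrow> real \<Rightarrow> real \<Rightarrow>
   real \<Rightarrow> real \<Rightarrow> real \<Rightarrow> real \<Rightarrow> real \<Rightarrow> real \<Rightarrow> bool" where
  "jacobi_system a1 a2 b1 b2 b3 b4 x1 x2 y1 y2 p1 p2 q1 q2 r1 r2 \<longleftrightarrow>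
     a1*x1 + a2*x2 = 0 \<and>
     a1*y1 + a2*y2 = 0 \<and>
     a1*p1 + a2*q1 - p1*x2 + p2*y2 + q1*x1 - q2*y1 = 0 \<and>
     a1*r1 - a2*p1 - p1*x1 + p2*y1 - r1*x2 + r2*y2 = 0 \<and>
     a1*p2 + a2*q2 - p1*y2 - p2*x2 + q1*y1 + q2*x1 = 0 \<and>
     a1*r2 - a2*p2 - p1*y1 - p2*x1 - r1*y2 - r2*x2 = 0 \<and>
     a1*b2 - 2*b1*x1 - b3*p1 - b4*p2 + q1*r2 - q2*r1 = 0 \<and>
     a2*b2 - 2*b2*x1 - b3*r1 - b4*r2 - 2*p1*r2 + 2*p2*r1 = 0 \<and>
     - b3*x1 + b4*y1 + p1*y1 - p2*x1 + r1*y2 - r2*x2 = 0 \<and>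
     - b3*y1 - b4*x1 + p1*x1 + p2*y1 + r1*x2 + r2*y2 = 0 \<and>
     - a1*b1 - 2*b1*x2 - b3*q1 - b4*q2 + 2*p1*q2 - 2*p2*q1 = 0 \<and>
     - a2*b1 - 2*b2*x2 + b3*p1 + b4*p2 - q1*r2 + q2*r1 = 0 \<and>
     - b3*x2 + b4*y2 - p1*y2 + p2*x2 + q1*y1 - q2*x1 = 0 \<and>
     - b3*y2 - b4*x2 - p1*x2 - p2*y2 + q1*x1 + q2*y1 = 0"

definition jacobi_identity :: "('a::real_vector \<Rightarrow> 'a \<Rightarrow> 'a) \<Rightarrow> bool" where
  "jacobi_identity br \<longleftrightarrow> (\<forall>u v w. br u (br v w) + br v (br w u) + br w (br u v) = 0)"

end

theory Submission
  imports Defs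
begin

lemma lin_scaleR_real: "linear (f::'a::real_vector \<Rightarrow> real) \<Longrightarrow> f (r *\<^sub>R b) = r * f b"
  using linear_scale by fastforce


lemma bil_linl: "bilinear f \<Longrightarrow> linear (\<lambda>x. f x v)" unfolding bilinear_def by blast
lemma bil_linr: "bilinear f \<Longrightarrow> linear (f u)" unfolding bilinear_def by blast
lemma bil_addl: "bilinear f \<Longrightarrow> f (x + y) v = f x v + f y v" using linear_add[OF bil_linl] by fastforce
lemma bil_addr: "bilinear f \<Longrightarrow> f u (x + y) = f u x + f u y" using linear_add[OF bil_linr] by fastforce
lemma bil_scalel: "bilinear f \<Longrightarrow> f (r *\<^sub>R x) v = r *\<^sub>R f x v" using linear_scale[OF bil_linl] by fastforce
lemma bil_scaler: "bilinear f \<Longrightarrow> f u (r *\<^sub>R x) = r *\<^sub>R f u x" using linear_scale[OF bil_linr] by fastforce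
lemma bil_negl: "bilinear f \<Longrightarrow> f (- x) v = - f x v" using linear_neg[OF bil_linl] by fastforce
lemma bil_negr: "bilinear f \<Longrightarrow> f u (- x) = - f u x" using linear_neg[OF bil_linr] by fastforce
lemma bil_diffl: "bilinear f \<Longrightarrow> f (x - y) v = f x v - f y v" using linear_diff[OF bil_linl] by fastforce
lemma bil_diffr: "bilinear f \<Longrightarrow> f u (x - y) = f u x - f u y" using linear_diff[OF bil_linr] by fastforce
lemma bil_0l: "bilinear f \<Longrightarrow> f 0 v = 0" using linear_0[OF bil_linl] by fastforce
lemma bil_0r: "bilinear f \<Longrightarrow> f u 0 = 0" using linear_0[OF bil_linr] by fastforce
lemmas bil_simps = bil_addl bil_addr bil_scalel bil_scaler bil_negl bil_negr bil_diffl bil_diffr bil_0l bil_0r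

lemma bil_skew: assumes "bilinear f" "\<And>u. f u u = 0" shows "f v u = - f u v"
proof -
  have "f u u + f v u + (f u v + f v v) = 0" using assms(2)[of "u+v"] unfolding bil_addl[OF assms(1)] bil_addr[OF assms(1)] .
  then have "f v u + f u v = 0" using assms(2) by (simp add: add.commute)
  then show ?thesis by (simp add: eq_neg_iff_add_eq_0)
qed

definition jac :: "('a::real_vector \<Rightarrow> 'a \<Rightarrow> 'a) \<Rightarrow> 'a \<Rightarrow> 'a \<Rightarrow> 'a \<Rightarrow> 'a" where
  "jac f u v w = f u (f v w) + f v (f w u) + f w (f u v)"

lemma jac_cyc: "jac f u v w = jac f v w u" unfolding jac_def by (simp add: algebra_simps)

lemma jac_anti: assumes "bilinear f" "\<And>u. f u u = 0" shows "jac f v u w = - jac f u v w"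
proof -
  have 1: "f v (f u w) = - f v (f w u)" unfolding bil_skew[OF assms, of u w] by (rule bil_negr[OF assms(1)])
  have 2: "f u (f w v) = - f u (f v w)" unfolding bil_skew[OF assms, of w v] by (rule bil_negr[OF assms(1)])
  have 3: "f w (f v u) = - f w (f u v)" unfolding bil_skew[OF assms, of v u] by (rule bil_negr[OF assms(1)])
  show ?thesis unfolding jac_def 1 2 3 by (simp add: algebra_simps)
qed

lemma jac_rep: assumes "bilinear f" "\<And>u. f u u = 0" shows "jac f u u w = 0"
proof -
  have 1: "f u (f w u) = - f u (f u w)" unfolding bil_skew[OF assms, of w u] by (rule bil_negr[OF assms(1)])
  show ?thesis unfolding jac_def 1 using assms(2) bil_0r[OF assms(1)] by simp
qed

lemma jac_lin1: assumes "bilinear f" shows "linear (\<lambda>u. jac f u v w)"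
proof -
  have l1: "linear (\<lambda>u. f u (f v w))" using bil_linl[OF assms] .
  have l2: "linear (\<lambda>u. f v (f w u))" using linear_compose[OF bil_linr[OF assms] bil_linr[OF assms]] by (simp add: o_def)
  have l3: "linear (\<lambda>u. f w (f u v))" using linear_compose[OF bil_linl[OF assms] bil_linr[OF assms]] by (simp add: o_def)
  show ?thesis unfolding jac_def using linear_compose_add[OF linear_compose_add[OF l1 l2] l3] .
qed


lemma jac_perm0: assumes "bilinear f" "\<And>u. f u u = 0" and "jac f u v w = 0"
  shows "jac f v u w = 0 \<and> jac f v w u = 0 \<and> jac f w u v = 0 \<and> jac f u w v = 0 \<and> jac f w v u = 0"
  using assms(3) jac_cyc[of f u v w] jac_cyc[of f v w u] jac_anti[OF assms(1,2), of u v w]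
    jac_anti[OF assms(1,2), of v w u] jac_anti[OF assms(1,2), of w u v]
  by (metis neg_equal_0_iff_equal)

lemma jac_rep': assumes "bilinear f" "\<And>u. f u u = 0"
  shows "jac f u u w = 0" "jac f u w u = 0" "jac f w u u = 0"
  using jac_rep[OF assms, of u w] jac_cyc[of f u w u] jac_cyc[of f w u u] by simp_all


lemma all4: "(\<forall>j<(4::nat). P j) \<longleftrightarrow> P 0 \<and> P 1 \<and> P 2 \<and> P 3"
  by (auto simp: numeral_eq_Suc less_Suc_eq)

lemma sum4: "(\<Sum>i<(4::nat). f i) = f 0 + f 1 + f 2 + f 3"
  by (simp add: numeral_eq_Suc)

lemma len4: "length [a, b, c, d] = 4" by simp
lemma len2: "length [a, b] = 2" by simp

lemma sum2: "(\<Sum>i<(2::nat). f i) = f 0 + f 1"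
  by (simp add: numeral_eq_Suc)


lemma indep_pair: assumes ind: "independent {x, y}" and ne: "x \<noteq> y" and eq: "a *\<^sub>R x + b *\<^sub>R y = 0"
  shows "a = 0 \<and> b = 0"
proof -
  have xs: "x \<notin> span {y}" and iy: "independent {y}" using ind ne by (simp_all add: independent_insert)
  have y0: "y \<noteq> 0" using iy by (simp add: independent_insert)
  have a0: "a = 0"
  proof (rule ccontr)
    assume "a \<noteq> 0"
    note an = this
    have ax: "a *\<^sub>R x = - (b *\<^sub>R y)" using eq by (simp add: eq_neg_iff_add_eq_0)
    have "x = (1/a) *\<^sub>R (a *\<^sub>R x)" using an by simp
    also have "\<dots> = (1/a) *\<^sub>R (- (b *\<^sub>R y))" using ax by simp
    also have "\<dots> = (- b / a) *\<^sub>R y" by simp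
    finally have "x = (- b / a) *\<^sub>R y" .
    moreover have "(- b / a) *\<^sub>R y \<in> span {y}" by (intro span_scale span_base) simp
    ultimately have "x \<in> span {y}" by (simp only:)
    then show False using xs by simp
  qed
  then have "b *\<^sub>R y = 0" using eq by simp
  then show ?thesis using a0 y0 by simp
qed
locale gc4 =
  fixes br :: "'g::euclidean_space \<Rightarrow> 'g \<Rightarrow> 'g" and J :: "'g \<Rightarrow> 'g"
    and R :: "('g \<Rightarrow> real) \<Rightarrow> 'g" and \<sigma> :: "'g \<Rightarrow> ('g \<Rightarrow> real)"
  assumes dim4: "DIM('g) = 4" and lie: "lie_algebra br"
    and gcs: "gen_complex_triple br J R \<sigma>" and type1: "gc_type1 R"
begin

abbreviation "K \<equiv> gc_K J R \<sigma>"

lemma Kin: "in_Phi a \<Longrightarrow> in_Phi (K a)"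
  using gcs unfolding gen_complex_triple_def gen_complex_structure_def by blast
lemma Kadd: "in_Phi a \<Longrightarrow> in_Phi b \<Longrightarrow> K (phi_add a b) = phi_add (K a) (K b)"
  using gcs unfolding gen_complex_triple_def gen_complex_structure_def by blast
lemma KK: "in_Phi a \<Longrightarrow> K (K a) = phi_neg a"
  using gcs unfolding gen_complex_triple_def gen_complex_structure_def by blast
lemma Kskew: "in_Phi a \<Longrightarrow> in_Phi b \<Longrightarrow> phi_pair (K a) b + phi_pair a (K b) = 0"
  using gcs unfolding gen_complex_triple_def gen_complex_structure_def by blast
lemma Knij: "in_Phi a \<Longrightarrow> in_Phi b \<Longrightarrow> nijenhuis br K a b = phi_zero"
  using gcs unfolding gen_complex_triple_def gen_complex_structure_def by blast

lemma zero_lin: "linear (\<lambda>w::'g. 0::real)"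
  by (simp add: linear_zero)

lemma sig_lin: "linear (\<sigma> u)"
proof -
  have "in_Phi (K (u, \<lambda>w. 0))" by (rule Kin) (simp add: in_Phi_def zero_lin)
  then show ?thesis by (simp add: in_Phi_def gc_K_def)
qed

lemma sig_skew: "\<sigma> u v = - \<sigma> v u"
proof -
  have "phi_pair (K (u, \<lambda>w. 0)) (v, \<lambda>w. 0) + phi_pair (u, \<lambda>w. 0) (K (v, \<lambda>w. 0)) = 0"
    by (rule Kskew) (simp_all add: in_Phi_def zero_lin)
  then show ?thesis by (simp add: phi_pair_def gc_K_def)
qed

lemma J_lin: "linear J"
proof -
  have s0: "linear (\<sigma> 0)" by (rule sig_lin)
  have "linear (\<lambda>w. J w \<bullet> b)" for b
  proof -
    have "in_Phi (K (0, \<lambda>w. w \<bullet> b))" by (rule Kin) (simp add: in_Phi_def bounded_linear_inner_left[THEN bounded_linear.linear])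
    then have "linear (\<lambda>w. \<sigma> 0 w - J w \<bullet> b)" by (simp add: in_Phi_def gc_K_def)
    from linear_compose_sub[OF s0 this] show ?thesis by simp
  qed
  then show ?thesis using linear_componentwise_iff by blast
qed

lemma J0[simp]: "J 0 = 0" using J_lin linear_0 by blast
lemma sig0[simp]: "\<sigma> u 0 = 0" using sig_lin linear_0 by blast
lemma sig0'[simp]: "\<sigma> 0 u = 0" using sig_skew[of 0 u] by simp

lemma sig_lin1: "linear (\<lambda>u. \<sigma> u w)"
proof -
  have "linear (\<lambda>u. - \<sigma> w u)" using sig_lin linear_compose_neg by blast
  then show ?thesis using sig_skew[of _ w] by simp
qed

lemma sig_add1: "\<sigma> (u + v) w = \<sigma> u w + \<sigma> v w"
  using linear_add[OF sig_lin1[of w], of u v] by simp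
lemma sig_scale1: "\<sigma> (r *\<^sub>R u) w = r * \<sigma> u w"
  using lin_scaleR_real[OF sig_lin1[of w], of r u] by simp
lemma sig_add2: "\<sigma> u (v + w) = \<sigma> u v + \<sigma> u w"
  using linear_add[OF sig_lin[of u], of v w] by simp
lemma sig_scale2: "\<sigma> u (r *\<^sub>R v) = r * \<sigma> u v"
  using lin_scaleR_real[OF sig_lin[of u], of r v] by simp
lemma sig_neg1: "\<sigma> (- u) w = - \<sigma> u w"
  using sig_scale1[of "-1" u w] by simp
lemma sig_neg2: "\<sigma> u (- w) = - \<sigma> u w"
  using sig_scale2[of u "-1" w] by simp
lemma sig_diff1: "\<sigma> (u - v) w = \<sigma> u w - \<sigma> v w"
  using sig_add1[of u "-v" w] sig_neg1 by simp
lemma sig_diff2: "\<sigma> u (v - w) = \<sigma> u v - \<sigma> u w"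
  using sig_add2[of u v "-w"] sig_neg2 by simp
lemmas sig_simps = sig_add1 sig_scale1 sig_add2 sig_scale2 sig_neg1 sig_neg2 sig_diff1 sig_diff2

lemma R_skew: "linear \<alpha> \<Longrightarrow> linear \<beta> \<Longrightarrow> \<beta> (R \<alpha>) = - \<alpha> (R \<beta>)"
proof -
  assume a: "linear \<alpha>" and b: "linear \<beta>"
  have "phi_pair (K (0, \<alpha>)) (0, \<beta>) + phi_pair (0, \<alpha>) (K (0, \<beta>)) = 0"
    by (rule Kskew) (simp_all add: in_Phi_def a b)
  then show ?thesis using a b by (simp add: phi_pair_def gc_K_def linear_0)
qed

lemma KK_fst: "linear \<alpha> \<Longrightarrow> J (J u + R \<alpha>) + R (\<lambda>w. \<sigma> u w - \<alpha> (J w)) = - u"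
proof -
  assume a: "linear \<alpha>"
  have "K (K (u, \<alpha>)) = phi_neg (u, \<alpha>)" by (rule KK) (simp add: in_Phi_def a)
  then show ?thesis by (simp add: gc_K_def phi_neg_def phi_scale_def)
qed

lemma KK_snd: "linear \<alpha> \<Longrightarrow> \<sigma> (J u + R \<alpha>) w - (\<sigma> u (J w) - \<alpha> (J (J w))) = - \<alpha> w"
proof -
  assume a: "linear \<alpha>"
  have "K (K (u, \<alpha>)) = phi_neg (u, \<alpha>)" by (rule KK) (simp add: in_Phi_def a)
  then have "snd (K (K (u, \<alpha>))) w = snd (phi_neg (u, \<alpha>)) w" by simp
  then show ?thesis by (simp add: gc_K_def phi_neg_def phi_scale_def)
qed

lemma R0[simp]: "R (\<lambda>w. 0) = 0"
proof -
  have "(\<lambda>w. w \<bullet> R (\<lambda>w. 0)) (R (\<lambda>w. 0)) = - (\<lambda>w. 0) (R (\<lambda>w. w \<bullet> R (\<lambda>w. 0)))"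
    by (rule R_skew) (simp_all add: zero_lin bounded_linear_inner_left[THEN bounded_linear.linear])
  then show ?thesis by simp
qed

lemma JJ_R: "J (J u) + R (\<sigma> u) = - u"
  using KK_fst[OF zero_lin, of u] by simp

lemma JR: "linear \<alpha> \<Longrightarrow> J (R \<alpha>) + R (\<lambda>w. - \<alpha> (J w)) = 0"
  using KK_fst[of \<alpha> 0] by simp

lemma sigJ: "\<sigma> (J u) w = \<sigma> u (J w)"
  using KK_snd[OF zero_lin, of u w] by simp

lemma sigR: "linear \<alpha> \<Longrightarrow> \<sigma> (R \<alpha>) w + \<alpha> (J (J w)) = - \<alpha> w"
  using KK_snd[of \<alpha> 0 w] by simp

end

lemma span2: "v \<in> span {e1, e2} \<longleftrightarrow> (\<exists>x y. v = x *\<^sub>R e1 + y *\<^sub>R e2)"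
proof
  assume "v \<in> span {e1, e2}"
  then obtain x where "v - x *\<^sub>R e1 \<in> span {e2}" using span_breakdown_eq by blast
  then obtain y where "v - x *\<^sub>R e1 - y *\<^sub>R e2 \<in> span {}" using span_breakdown_eq by blast
  then have "v = x *\<^sub>R e1 + y *\<^sub>R e2" by (simp add: algebra_simps)
  then show "\<exists>x y. v = x *\<^sub>R e1 + y *\<^sub>R e2" by blast
next
  assume "\<exists>x y. v = x *\<^sub>R e1 + y *\<^sub>R e2"
  then obtain x y where "v = x *\<^sub>R e1 + y *\<^sub>R e2" by blast
  then show "v \<in> span {e1, e2}"
    by (simp add: span_add span_scale span_base)
qed

locale hb = gc4 +
  fixes e1 e2
  assumes e1h: "e1 \<in> imR R" and e2h: "e2 \<in> imR R" and hspan: "imR R \<subseteq> span {e1, e2}"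
    and ind2: "\<And>x y. x *\<^sub>R e1 + y *\<^sub>R e2 = 0 \<Longrightarrow> x = 0 \<and> y = 0"
begin

lemma e1ne: "e1 \<noteq> e2" using ind2[of 1 "-1"] by auto
lemma e1nz: "e1 \<noteq> 0" using ind2[of 1 0] by auto
lemma e2nz: "e2 \<noteq> 0" using ind2[of 0 1] by auto

lemma indep2: "independent {e1, e2}"
proof -
  have "e1 \<notin> span {e2}"
  proof
    assume "e1 \<in> span {e2}"
    then obtain k where "e1 - k *\<^sub>R e2 \<in> span {}" using span_breakdown_eq by blast
    then have "1 *\<^sub>R e1 + (-k) *\<^sub>R e2 = 0" by simp
    then show False using ind2[of 1 "-k"] by simp
  qed
  moreover have "independent {e2}" using e2nz by (simp add: independent_insert)
  ultimately show ?thesis using e1ne by (simp add: independent_insert)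
qed

definition "f1 = (SOME f. linear f \<and> f e1 = (1::real) \<and> f e2 = 0)"
definition "f2 = (SOME f. linear f \<and> f e1 = (0::real) \<and> f e2 = 1)"

lemma f_ex: "\<exists>f. linear f \<and> f e1 = (c1::real) \<and> f e2 = c2"
proof -
  obtain g where g: "linear g" "\<forall>x\<in>{e1,e2}. g x = (if x = e1 then c1 else c2)"
    using linear_independent_extend[OF indep2, of "\<lambda>x. if x = e1 then c1 else c2"] by blast
  have "g e1 = c1" using g(2) by simp
  moreover have "g e2 = c2" using g(2) e1ne by (simp add: eq_commute[of e2 e1])
  ultimately show ?thesis using g(1) by blast
qed

lemma f1all: "linear f1 \<and> f1 e1 = 1 \<and> f1 e2 = 0"
  unfolding f1_def by (rule someI_ex[OF f_ex])
lemma f2all: "linear f2 \<and> f2 e1 = 0 \<and> f2 e2 = 1"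
  unfolding f2_def by (rule someI_ex[OF f_ex])
lemmas f1 = f1all[THEN conjunct1] f1all[THEN conjunct2, THEN conjunct1] f1all[THEN conjunct2, THEN conjunct2]
lemmas f2 = f2all[THEN conjunct1] f2all[THEN conjunct2, THEN conjunct1] f2all[THEN conjunct2, THEN conjunct2]

lemma inh: "v \<in> imR R \<Longrightarrow> v = f1 v *\<^sub>R e1 + f2 v *\<^sub>R e2"
proof -
  assume "v \<in> imR R"
  then obtain x y where v: "v = x *\<^sub>R e1 + y *\<^sub>R e2" using hspan span2 by blast
  have "f1 v = x" unfolding v using f1 by (simp add: linear_add lin_scaleR_real)
  moreover have "f2 v = y" unfolding v using f2 by (simp add: linear_add lin_scaleR_real)
  ultimately show ?thesis using v by (simp only:)
qed

lemma Rin: "linear \<alpha> \<Longrightarrow> R \<alpha> \<in> imR R" by (simp add: imR_def)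

definition "a = f2 (R f1)"

lemma Rform: "linear \<alpha> \<Longrightarrow> R \<alpha> = a *\<^sub>R (\<alpha> e1 *\<^sub>R e2 - \<alpha> e2 *\<^sub>R e1)"
proof -
  assume al: "linear \<alpha>"
  have Rf1: "R f1 = a *\<^sub>R e2"
  proof -
    have "f1 (R f1) = - f1 (R f1)" using R_skew[OF f1(1) f1(1)] .
    then have "f1 (R f1) = 0" by simp
    then show ?thesis using inh[OF Rin[OF f1(1)]] a_def by simp
  qed
  have Rf2: "R f2 = (-a) *\<^sub>R e1"
  proof -
    have "f2 (R f2) = - f2 (R f2)" using R_skew[OF f2(1) f2(1)] .
    then have "f2 (R f2) = 0" by simp
    moreover have "f1 (R f2) = - f2 (R f1)" using R_skew[OF f2(1) f1(1)] .
    ultimately show ?thesis using inh[OF Rin[OF f2(1)]] a_def by simp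
  qed
  have x: "f1 (R \<alpha>) = - a * \<alpha> e2" using R_skew[OF al f1(1)] Rf1 lin_scaleR_real[OF al] by simp
  have y: "f2 (R \<alpha>) = a * \<alpha> e1" using R_skew[OF al f2(1)] Rf2 lin_scaleR_real[OF al] linear_neg[OF al] by simp
  show ?thesis using inh[OF Rin[OF al]] x y by (simp add: algebra_simps)
qed

lemma a_nz: "a \<noteq> 0"
proof
  assume "a = 0"
  obtain \<alpha> where "linear \<alpha>" "e1 = R \<alpha>" using e1h unfolding imR_def by blast
  then have "e1 = 0" using Rform \<open>a = 0\<close> by simp
  then show False using e1nz by simp
qed


lemma lin_cmul: "linear (f::'b::real_vector \<Rightarrow> real) \<Longrightarrow> linear (\<lambda>x. c * f x)"
  using linear_compose_scale_right[of f c] by simp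

lemma lin_J: "linear \<alpha> \<Longrightarrow> linear (\<lambda>w. \<alpha> (J w))"
  using linear_compose[OF J_lin, of \<alpha>] by (simp add: o_def)

lemma JRform: "linear \<alpha> \<Longrightarrow> J (R \<alpha>) = a *\<^sub>R (\<alpha> (J e1) *\<^sub>R e2 - \<alpha> (J e2) *\<^sub>R e1)"
proof -
  assume al: "linear \<alpha>"
  have l: "linear (\<lambda>w. - \<alpha> (J w))" using linear_compose_neg[OF lin_J[OF al]] .
  have "J (R \<alpha>) = - R (\<lambda>w. - \<alpha> (J w))" using JR[OF al] by (simp add: eq_neg_iff_add_eq_0)
  also have "\<dots> = a *\<^sub>R (\<alpha> (J e1) *\<^sub>R e2 - \<alpha> (J e2) *\<^sub>R e1)" using Rform[OF l] by (simp add: algebra_simps)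
  finally show ?thesis .
qed

lemma E1: "e1 = R (\<lambda>w. (-1/a) * f2 w)"
  using Rform[OF lin_cmul[OF f2(1)], of "-1/a"] f2 a_nz by simp
lemma E2: "e2 = R (\<lambda>w. (1/a) * f1 w)"
  using Rform[OF lin_cmul[OF f1(1)], of "1/a"] f1 a_nz by simp

definition "lam = f1 (J e1)"

lemma Je1': "J e1 = f2 (J e2) *\<^sub>R e1 - f2 (J e1) *\<^sub>R e2"
proof -
  have "J e1 = J (R (\<lambda>w. (-1/a) * f2 w))" using E1 by simp
  also have "\<dots> = f2 (J e2) *\<^sub>R e1 - f2 (J e1) *\<^sub>R e2"
    using JRform[OF lin_cmul[OF f2(1)], of "-1/a"] a_nz by (simp add: algebra_simps)
  finally show ?thesis .
qed

lemma Je2': "J e2 = f1 (J e1) *\<^sub>R e2 - f1 (J e2) *\<^sub>R e1"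
proof -
  have "J e2 = J (R (\<lambda>w. (1/a) * f1 w))" using E2 by simp
  also have "\<dots> = f1 (J e1) *\<^sub>R e2 - f1 (J e2) *\<^sub>R e1"
    using JRform[OF lin_cmul[OF f1(1)], of "1/a"] a_nz by (simp add: algebra_simps)
  finally show ?thesis .
qed

lemma f2Je1: "f2 (J e1) = 0"
proof -
  have "f2 (J e1) = f2 (f2 (J e2) *\<^sub>R e1 - f2 (J e1) *\<^sub>R e2)" using Je1' by simp
  also have "\<dots> = - f2 (J e1)" using f2 by (simp add: linear_diff lin_scaleR_real)
  finally show ?thesis by simp
qed

lemma f1Je2: "f1 (J e2) = 0"
proof -
  have "f1 (J e2) = f1 (f1 (J e1) *\<^sub>R e2 - f1 (J e2) *\<^sub>R e1)" using Je2' by simp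
  also have "\<dots> = - f1 (J e2)" using f1 by (simp add: linear_diff lin_scaleR_real)
  finally show ?thesis by simp
qed

lemma Je2: "J e2 = lam *\<^sub>R e2" using Je2' f1Je2 lam_def by simp

lemma Je1: "J e1 = lam *\<^sub>R e1"
proof -
  have "f1 (J e1) = f1 (f2 (J e2) *\<^sub>R e1 - f2 (J e1) *\<^sub>R e2)" using Je1' by simp
  then have "f1 (J e1) = f2 (J e2)" using f1 by (simp add: linear_diff lin_scaleR_real)
  then show ?thesis using Je1' f2Je1 lam_def by simp
qed

definition "c = \<sigma> e1 e2"

lemma sigma_lin_comb: "\<sigma> (x *\<^sub>R u + y *\<^sub>R v) w = x * \<sigma> u w + y * \<sigma> v w"
  by (simp add: sig_add1 sig_scale1)

lemma ac: "a * c = 1 + lam\<^sup>2"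
proof -
  have "J (J e1) + R (\<sigma> e1) = - e1" by (rule JJ_R)
  moreover have "J (J e1) = (lam * lam) *\<^sub>R e1" using Je1 J_lin by (simp add: linear_scale)
  moreover have "R (\<sigma> e1) = (- a * c) *\<^sub>R e1" using Rform[OF sig_lin] c_def sig_skew[of e1 e1] by simp
  ultimately have "(lam * lam - a * c + 1) *\<^sub>R e1 + 0 *\<^sub>R e2 = 0" by (simp add: algebra_simps)
  then have "lam * lam - a * c + 1 = 0" using ind2 by blast
  then show ?thesis by (simp add: power2_eq_square)
qed

lemma c_nz: "c \<noteq> 0" using ac by (metis add_pos_nonneg mult_zero_right zero_le_power2 zero_less_one less_irrefl)


lemma span_sub: "x *\<^sub>R e1 + y *\<^sub>R e2 \<in> imR R"
proof -
  have l: "linear (\<lambda>w. (y/a) * f1 w - (x/a) * f2 w)"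
    using linear_compose_sub[OF lin_cmul[OF f1(1), of "y/a"] lin_cmul[OF f2(1), of "x/a"]] .
  have "R (\<lambda>w. (y/a) * f1 w - (x/a) * f2 w) = x *\<^sub>R e1 + y *\<^sub>R e2"
    using Rform[OF l] f1 f2 a_nz by (simp add: algebra_simps)
  then show ?thesis using Rin[OF l] by simp
qed

lemma h_cap: "u \<in> imR R \<Longrightarrow> \<sigma> u e1 = 0 \<Longrightarrow> \<sigma> u e2 = 0 \<Longrightarrow> u = 0"
proof -
  assume u: "u \<in> imR R" and s1: "\<sigma> u e1 = 0" and s2: "\<sigma> u e2 = 0"
  have ue: "u = f1 u *\<^sub>R e1 + f2 u *\<^sub>R e2" using inh[OF u] .
  have "\<sigma> u e2 = f1 u * c" using arg_cong[OF ue, of "\<lambda>z. \<sigma> z e2"] sigma_lin_comb c_def sig_skew[of e2 e2]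
    by simp
  then have "f1 u = 0" using s2 c_nz by simp
  have "\<sigma> u e1 = - f2 u * c" using arg_cong[OF ue, of "\<lambda>z. \<sigma> z e1"] sigma_lin_comb c_def sig_skew[of e2 e1]
      sig_skew[of e1 e1] by simp
  then have "f2 u = 0" using s1 c_nz by simp
  show "u = 0" using ue \<open>f1 u = 0\<close> \<open>f2 u = 0\<close> by simp
qed

definition "V = {v. \<sigma> v e1 = 0 \<and> \<sigma> v e2 = 0}"

definition "hw w = (\<sigma> w e2 / c) *\<^sub>R e1 - (\<sigma> w e1 / c) *\<^sub>R e2"

lemma hw_in: "hw w \<in> imR R"
  using span_sub[of "\<sigma> w e2 / c" "- (\<sigma> w e1 / c)"] unfolding hw_def by simp

lemma hw_V: "w - hw w \<in> V"
  unfolding V_def hw_def using c_nz c_def sig_skew[of e2 e1] sig_skew[of e1 e1] sig_skew[of e2 e2]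
  by (simp add: sig_simps)

lemma V_comb: "u \<in> V \<Longrightarrow> v \<in> V \<Longrightarrow> x *\<^sub>R u + y *\<^sub>R v \<in> V"
  unfolding V_def by (simp add: sig_simps)

lemma V_J: "v \<in> V \<Longrightarrow> J v \<in> V"
  unfolding V_def using sigJ Je1 Je2 by (simp add: sig_simps)

lemma V_JJ: "v \<in> V \<Longrightarrow> J (J v) = - v"
  using JJ_R[of v] Rform[OF sig_lin, of v] unfolding V_def by simp

lemma sig_vJv: "\<sigma> v (J v) = 0"
  using sigJ[of v v] sig_skew[of "J v" v] by simp

lemma J_comb: "J (x *\<^sub>R u + y *\<^sub>R v) = x *\<^sub>R J u + y *\<^sub>R J v"
  using J_lin by (simp add: linear_add linear_scale)

lemma ind4: assumes v: "v \<in> V" "v \<noteq> 0" and eq: "x1 *\<^sub>R e1 + x2 *\<^sub>R e2 + x3 *\<^sub>R v + x4 *\<^sub>R J v = 0"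
  shows "x1 = 0 \<and> x2 = 0 \<and> x3 = 0 \<and> x4 = 0"
proof -
  let ?p = "x3 *\<^sub>R v + x4 *\<^sub>R J v"
  have pV: "?p \<in> V" using V_comb[OF v(1) V_J[OF v(1)]] .
  have "?p = - (x1 *\<^sub>R e1 + x2 *\<^sub>R e2)" using eq by (simp add: algebra_simps eq_neg_iff_add_eq_0)
  also have "\<dots> = (-x1) *\<^sub>R e1 + (-x2) *\<^sub>R e2" by simp
  finally have pe: "?p = (-x1) *\<^sub>R e1 + (-x2) *\<^sub>R e2" .
  have "?p \<in> imR R" unfolding pe by (rule span_sub)
  then have p0: "?p = 0" using h_cap[of ?p] pV unfolding V_def by blast
  then have "(-x1) *\<^sub>R e1 + (-x2) *\<^sub>R e2 = 0" using pe by simp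
  then have x12: "x1 = 0 \<and> x2 = 0" using ind2 by fastforce
  have "J ?p = x3 *\<^sub>R J v - x4 *\<^sub>R v" using J_comb[of x3 v x4 "J v"] V_JJ[OF v(1)] by simp
  then have q0: "x3 *\<^sub>R J v - x4 *\<^sub>R v = 0" using p0 by simp
  have "(x3 * x3 + x4 * x4) *\<^sub>R v = x3 *\<^sub>R ?p - x4 *\<^sub>R (x3 *\<^sub>R J v - x4 *\<^sub>R v)"
    by (simp add: algebra_simps)
  then have "(x3 * x3 + x4 * x4) *\<^sub>R v = 0" using p0 q0 by simp
  then have "x3 * x3 + x4 * x4 = 0" using v(2) by simp
  then have "x3 = 0 \<and> x4 = 0" by (metis add_nonneg_eq_0_iff mult_eq_0_iff zero_le_square)
  then show ?thesis using x12 by simp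
qed


lemma indB4: assumes v: "v \<in> V" "v \<noteq> 0"
  shows "independent (insert (J v) (insert v {e1, e2})) \<and> v \<notin> {e1, e2} \<and> J v \<notin> insert v {e1, e2}"
proof -
  have nv: "v \<notin> span {e1, e2}"
  proof
    assume "v \<in> span {e1, e2}"
    then obtain x y where "v = x *\<^sub>R e1 + y *\<^sub>R e2" using span2 by blast
    then have "x *\<^sub>R e1 + y *\<^sub>R e2 + (-1) *\<^sub>R v + 0 *\<^sub>R J v = 0" by simp
    from ind4[OF v this] show False by simp
  qed
  have nJv: "J v \<notin> span (insert v {e1, e2})"
  proof
    assume "J v \<in> span (insert v {e1, e2})"
    then obtain k where "J v - k *\<^sub>R v \<in> span {e1, e2}" using span_breakdown_eq by blast
    then obtain x y where "J v - k *\<^sub>R v = x *\<^sub>R e1 + y *\<^sub>R e2" using span2 by blast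
    then have "x *\<^sub>R e1 + y *\<^sub>R e2 + k *\<^sub>R v + (-1) *\<^sub>R J v = 0" by (simp add: algebra_simps)
    from ind4[OF v this] show False by simp
  qed
  let ?B = "insert (J v) (insert v {e1, e2})"
  have nv': "v \<notin> {e1, e2}" using nv span_base[of v "{e1,e2}"] by blast
  have nJv': "J v \<notin> insert v {e1, e2}" using nJv span_base[of "J v" "insert v {e1, e2}"] by blast
  have indB: "independent ?B"
    using indep2 nv nJv nv' nJv' by (simp add: independent_insert)
  then show ?thesis using nv' nJv' by blast
qed

lemma span4: assumes v: "v \<in> V" "v \<noteq> 0"
  shows "\<exists>x1 x2 x3 x4. w = x1 *\<^sub>R e1 + x2 *\<^sub>R e2 + x3 *\<^sub>R v + x4 *\<^sub>R J v"
proof -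
  let ?B = "insert (J v) (insert v {e1, e2})"
  have indB: "independent ?B" and nv': "v \<notin> {e1, e2}" and nJv': "J v \<notin> insert v {e1, e2}"
    using indB4[OF v] by blast+
  have "card ?B = 4" using nv' nJv' e1ne by simp
  then have "dim (UNIV::'a set) \<le> card ?B" using dim4 dim_UNIV by simp
  then have "UNIV \<subseteq> span ?B" using card_ge_dim_independent[OF _ indB, of UNIV] by simp
  then have "w \<in> span ?B" by blast
  then obtain k1 where "w - k1 *\<^sub>R J v \<in> span (insert v {e1, e2})" using span_breakdown_eq by blast
  then obtain k2 where "w - k1 *\<^sub>R J v - k2 *\<^sub>R v \<in> span {e1, e2}" using span_breakdown_eq by blast
  then obtain x y where "w - k1 *\<^sub>R J v - k2 *\<^sub>R v = x *\<^sub>R e1 + y *\<^sub>R e2" using span2 by blast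
  then have "w = x *\<^sub>R e1 + y *\<^sub>R e2 + k2 *\<^sub>R v + k1 *\<^sub>R J v" by (simp add: algebra_simps)
  then show ?thesis by blast
qed

lemma V_nontriv: "\<exists>v. v \<in> V \<and> v \<noteq> 0"
proof (rule ccontr)
  assume "\<not> ?thesis"
  then have n: "\<And>v. v \<in> V \<Longrightarrow> v = 0" by blast
  have "w \<in> span {e1, e2}" for w
  proof -
    have "w - hw w = 0" using n[OF hw_V] .
    then have e: "w = hw w" by simp
    have "hw w \<in> span {e1, e2}" using hw_in[of w] hspan by blast
    then show ?thesis using e by (rule ssubst[of w "hw w" "\<lambda>z. z \<in> span {e1, e2}", rotated])
  qed
  then have "UNIV \<subseteq> span {e1, e2}" by blast
  from dim_le_card[OF this] show False using dim4 dim_UNIV e1ne by simp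
qed

lemma V_span: assumes v: "v \<in> V" "v \<noteq> 0" and u: "u \<in> V"
  shows "\<exists>x y. u = x *\<^sub>R v + y *\<^sub>R J v"
proof -
  obtain x1 x2 x3 x4 where ue: "u = x1 *\<^sub>R e1 + x2 *\<^sub>R e2 + x3 *\<^sub>R v + x4 *\<^sub>R J v" using span4[OF v] by blast
  let ?q = "u - x3 *\<^sub>R v - x4 *\<^sub>R J v"
  have "?q = x1 *\<^sub>R e1 + x2 *\<^sub>R e2" using ue by simp
  then have qh: "?q \<in> imR R" using span_sub by simp
  have "1 *\<^sub>R u + (-1) *\<^sub>R (x3 *\<^sub>R v + x4 *\<^sub>R J v) \<in> V"
    by (rule V_comb[OF u V_comb[OF v(1) V_J[OF v(1)]]])
  moreover have "?q = 1 *\<^sub>R u + (-1) *\<^sub>R (x3 *\<^sub>R v + x4 *\<^sub>R J v)" by (simp add: algebra_simps)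
  ultimately have "?q \<in> V" by (simp only:)
  then have q0: "?q = 0" using h_cap qh unfolding V_def by blast
  have "u = ?q + (x3 *\<^sub>R v + x4 *\<^sub>R J v)" by simp
  then have "u = x3 *\<^sub>R v + x4 *\<^sub>R J v" using q0 by simp
  then show ?thesis by blast
qed

lemma V_ker: assumes u: "u \<in> V" shows "\<sigma> u = (\<lambda>w. 0)"
proof (cases "u = 0")
  case True then show ?thesis by auto
next
  case False
  have vv: "\<sigma> u' u'' = 0" if h1: "u' \<in> V" and h2: "u'' \<in> V" for u' u''
  proof -
    obtain x y where x: "u' = x *\<^sub>R u + y *\<^sub>R J u" using V_span[OF u False h1] by blast
    obtain x' y' where x': "u'' = x' *\<^sub>R u + y' *\<^sub>R J u" using V_span[OF u False h2] by blast
    have a1: "\<sigma> u u = 0" "\<sigma> (J u) (J u) = 0" using sig_skew[of u u] sig_skew[of "J u" "J u"] by simp_all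
    have a2: "\<sigma> (J u) u = 0" using sig_vJv[of u] sig_skew[of u "J u"] by simp
    show ?thesis unfolding x x' using sig_vJv[of u] a1 a2 by (simp add: sig_simps)
  qed
  show ?thesis
  proof
    fix w
    have "w = hw w + (w - hw w)" by simp
    then have "\<sigma> u w = \<sigma> u (hw w) + \<sigma> u (w - hw w)" by (metis sig_add2)
    also have "\<sigma> u (hw w) = 0" using u unfolding hw_def V_def
      using sig_skew[of u e1] sig_skew[of u e2] by (simp add: sig_simps)
    also have "\<sigma> u (w - hw w) = 0" using vv[OF u hw_V] .
    finally show "\<sigma> u w = 0" by simp
  qed
qed

lemma ker_V: "ker_sigma \<sigma> = V"
proof
  show "ker_sigma \<sigma> \<subseteq> V" unfolding ker_sigma_def V_def by (auto dest: fun_cong)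
  show "V \<subseteq> ker_sigma \<sigma>" unfolding ker_sigma_def using V_ker by blast
qed

end

locale fb = hb +
  fixes e3 e4
  assumes e3V: "e3 \<in> V" and e3nz: "e3 \<noteq> 0" and e4def: "e4 = J e3"
begin

lemma Je3: "J e3 = e4" using e4def by simp
lemma Je4: "J e4 = - e3" using e4def V_JJ[OF e3V] by simp
lemma e4V: "e4 \<in> V" using e4def V_J[OF e3V] by simp

lemma distinct4: "e1 \<noteq> e2" "e3 \<noteq> e1" "e3 \<noteq> e2" "e4 \<noteq> e1" "e4 \<noteq> e2" "e4 \<noteq> e3"
  using indB4[OF e3V e3nz] e1ne e4def by auto

lemma indep4: "independent {e1, e2, e3, e4}"
proof -
  have "insert (J e3) (insert e3 {e1, e2}) = {e1, e2, e3, e4}" using e4def by auto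
  then show ?thesis using indB4[OF e3V e3nz] by simp
qed

lemma g_ex: "\<exists>f. linear f \<and> f e1 = (c1::real) \<and> f e2 = c2 \<and> f e3 = c3 \<and> f e4 = c4"
proof -
  obtain g where g: "linear g" "\<forall>x\<in>{e1,e2,e3,e4}. g x = (if x = e1 then c1 else if x = e2 then c2 else if x = e3 then c3 else c4)"
    using linear_independent_extend[OF indep4, of "\<lambda>x. if x = e1 then c1 else if x = e2 then c2 else if x = e3 then c3 else c4"] by blast
  have "g e1 = c1" using g(2) by simp
  moreover have "g e2 = c2" using g(2) distinct4 by (simp add: eq_commute[of e2 e1])
  moreover have "g e3 = c3" using g(2) distinct4 by simp
  moreover have "g e4 = c4" using g(2) distinct4 by simp
  ultimately show ?thesis using g(1) by blast
qed

definition "g1 = (SOME f. linear f \<and> f e1 = (1::real) \<and> f e2 = 0 \<and> f e3 = 0 \<and> f e4 = 0)"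
definition "g2 = (SOME f. linear f \<and> f e1 = (0::real) \<and> f e2 = 1 \<and> f e3 = 0 \<and> f e4 = 0)"
definition "g3 = (SOME f. linear f \<and> f e1 = (0::real) \<and> f e2 = 0 \<and> f e3 = 1 \<and> f e4 = 0)"
definition "g4 = (SOME f. linear f \<and> f e1 = (0::real) \<and> f e2 = 0 \<and> f e3 = 0 \<and> f e4 = 1)"

lemma g1all: "linear g1 \<and> g1 e1 = 1 \<and> g1 e2 = 0 \<and> g1 e3 = 0 \<and> g1 e4 = 0"
  unfolding g1_def by (rule someI_ex[OF g_ex])
lemma g2all: "linear g2 \<and> g2 e1 = 0 \<and> g2 e2 = 1 \<and> g2 e3 = 0 \<and> g2 e4 = 0"
  unfolding g2_def by (rule someI_ex[OF g_ex])
lemma g3all: "linear g3 \<and> g3 e1 = 0 \<and> g3 e2 = 0 \<and> g3 e3 = 1 \<and> g3 e4 = 0"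
  unfolding g3_def by (rule someI_ex[OF g_ex])
lemma g4all: "linear g4 \<and> g4 e1 = 0 \<and> g4 e2 = 0 \<and> g4 e3 = 0 \<and> g4 e4 = 1"
  unfolding g4_def by (rule someI_ex[OF g_ex])

lemma glin: "linear g1" "linear g2" "linear g3" "linear g4"
  using g1all g2all g3all g4all by blast+

lemma gval[simp]:
  "g1 e1 = 1" "g1 e2 = 0" "g1 e3 = 0" "g1 e4 = 0"
  "g2 e1 = 0" "g2 e2 = 1" "g2 e3 = 0" "g2 e4 = 0"
  "g3 e1 = 0" "g3 e2 = 0" "g3 e3 = 1" "g3 e4 = 0"
  "g4 e1 = 0" "g4 e2 = 0" "g4 e3 = 0" "g4 e4 = 1"
  using g1all g2all g3all g4all by blast+

lemma g_add[simp]: "g1 (x + y) = g1 x + g1 y" "g2 (x + y) = g2 x + g2 y" "g3 (x + y) = g3 x + g3 y" "g4 (x + y) = g4 x + g4 y"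
  using glin by (simp_all add: linear_add)
lemma g_diff[simp]: "g1 (x - y) = g1 x - g1 y" "g2 (x - y) = g2 x - g2 y" "g3 (x - y) = g3 x - g3 y" "g4 (x - y) = g4 x - g4 y"
  using glin by (simp_all add: linear_diff)
lemma g_neg[simp]: "g1 (- x) = - g1 x" "g2 (- x) = - g2 x" "g3 (- x) = - g3 x" "g4 (- x) = - g4 x"
  using glin by (simp_all add: linear_neg)
lemma g_scale[simp]: "g1 (r *\<^sub>R x) = r * g1 x" "g2 (r *\<^sub>R x) = r * g2 x" "g3 (r *\<^sub>R x) = r * g3 x" "g4 (r *\<^sub>R x) = r * g4 x"
  using glin by (simp_all add: lin_scaleR_real)
lemma g_zero[simp]: "g1 0 = 0" "g2 0 = 0" "g3 0 = 0" "g4 0 = 0"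
  using glin by (simp_all add: linear_0)

lemma coords: "w = g1 w *\<^sub>R e1 + g2 w *\<^sub>R e2 + g3 w *\<^sub>R e3 + g4 w *\<^sub>R e4"
proof -
  obtain x1 x2 x3 x4 where w: "w = x1 *\<^sub>R e1 + x2 *\<^sub>R e2 + x3 *\<^sub>R e3 + x4 *\<^sub>R e4"
    using span4[OF e3V e3nz, of w] e4def by blast
  have "g1 w = x1" "g2 w = x2" "g3 w = x3" "g4 w = x4" unfolding w by simp_all
  then show ?thesis using w by (simp only:)
qed

lemma vec_eq: "g1 v = g1 w \<Longrightarrow> g2 v = g2 w \<Longrightarrow> g3 v = g3 w \<Longrightarrow> g4 v = g4 w \<Longrightarrow> v = w"
  using coords[of v] coords[of w] by metis

lemma gJ[simp]: "g1 (J w) = lam * g1 w" "g2 (J w) = lam * g2 w" "g3 (J w) = - g4 w" "g4 (J w) = g3 w"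
proof -
  have "J w = J (g1 w *\<^sub>R e1 + g2 w *\<^sub>R e2 + g3 w *\<^sub>R e3 + g4 w *\<^sub>R e4)" using coords[of w] by metis
  also have "\<dots> = (lam * g1 w) *\<^sub>R e1 + (lam * g2 w) *\<^sub>R e2 + (- g4 w) *\<^sub>R e3 + g3 w *\<^sub>R e4"
    using J_lin Je1 Je2 Je3 Je4 by (simp add: linear_add linear_scale mult.commute)
  finally have Jw: "J w = (lam * g1 w) *\<^sub>R e1 + (lam * g2 w) *\<^sub>R e2 + (- g4 w) *\<^sub>R e3 + g3 w *\<^sub>R e4" .
  show "g1 (J w) = lam * g1 w" by (subst Jw) simp
  show "g2 (J w) = lam * g2 w" by (subst Jw) simp
  show "g3 (J w) = - g4 w" by (subst Jw) simp
  show "g4 (J w) = g3 w" by (subst Jw) simp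
qed

lemma sig_e3: "\<sigma> e3 = (\<lambda>w. 0)" using V_ker[OF e3V] .
lemma sig_e4: "\<sigma> e4 = (\<lambda>w. 0)" using V_ker[OF e4V] .

lemma sigF: "\<sigma> u w = c * (g1 u * g2 w - g1 w * g2 u)"
proof -
  have s3: "\<sigma> e3 x = 0" "\<sigma> x e3 = 0" "\<sigma> e4 x = 0" "\<sigma> x e4 = 0" for x
    using sig_e3 sig_e4 sig_skew[of x e3] sig_skew[of x e4] by auto
  have s12: "\<sigma> e1 e1 = 0" "\<sigma> e2 e2 = 0" "\<sigma> e1 e2 = c" "\<sigma> e2 e1 = - c"
    using sig_skew[of e1 e1] sig_skew[of e2 e2] sig_skew[of e2 e1] c_def by auto
  have "\<sigma> u w = \<sigma> (g1 u *\<^sub>R e1 + g2 u *\<^sub>R e2 + g3 u *\<^sub>R e3 + g4 u *\<^sub>R e4) (g1 w *\<^sub>R e1 + g2 w *\<^sub>R e2 + g3 w *\<^sub>R e3 + g4 w *\<^sub>R e4)"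
    using coords[of u] coords[of w] by metis
  also have "\<dots> = c * (g1 u * g2 w - g1 w * g2 u)"
    using s3 s12 by (simp add: sig_simps algebra_simps)
  finally show ?thesis .
qed


lemma br_bil: "bilinear br" using lie unfolding lie_algebra_def by blast
lemma br_self[simp]: "br u u = 0" using lie unfolding lie_algebra_def by blast
lemma br_linr: "linear (br u)" using br_bil unfolding bilinear_def by blast
lemma br_linl: "linear (\<lambda>x. br x v)" using br_bil unfolding bilinear_def by blast
lemma br_addl[simp]: "br (x + y) v = br x v + br y v" using linear_add[OF br_linl] by simp
lemma br_addr[simp]: "br u (x + y) = br u x + br u y" using linear_add[OF br_linr] by simp
lemma br_scalel[simp]: "br (r *\<^sub>R x) v = r *\<^sub>R br x v" using linear_scale[OF br_linl] by simp
lemma br_scaler[simp]: "br u (r *\<^sub>R x) = r *\<^sub>R br u x" using linear_scale[OF br_linr] by simp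
lemma br_negl[simp]: "br (- x) v = - br x v" using linear_neg[OF br_linl] by simp
lemma br_negr[simp]: "br u (- x) = - br u x" using linear_neg[OF br_linr] by simp
lemma br_diffl[simp]: "br (x - y) v = br x v - br y v" using linear_diff[OF br_linl] by simp
lemma br_diffr[simp]: "br u (x - y) = br u x - br u y" using linear_diff[OF br_linr] by simp
lemma br_0l[simp]: "br 0 v = 0" using linear_0[OF br_linl] by simp
lemma br_0r[simp]: "br u 0 = 0" using linear_0[OF br_linr] by simp
lemma br_skew: "br v u = - br u v"
proof -
  have "br u u + br v u + (br u v + br v v) = 0" using br_self[of "u+v"] unfolding br_addl br_addr .
  then have "br u v + br v u = 0" by (simp add: add.commute)
  then have "br v u + br u v = 0" by (simp add: add.commute)
  then show ?thesis by (simp add: eq_neg_iff_add_eq_0)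
qed
lemma br_sk[simp]: "br e2 e1 = - br e1 e2" "br e3 e1 = - br e1 e3" "br e4 e1 = - br e1 e4"
  "br e3 e2 = - br e2 e3" "br e4 e2 = - br e2 e4" "br e4 e3 = - br e3 e4"
  by (rule br_skew)+

lemma J_add[simp]: "J (x + y) = J x + J y" using J_lin by (simp add: linear_add)
lemma J_scale[simp]: "J (r *\<^sub>R x) = r *\<^sub>R J x" using J_lin by (simp add: linear_scale)
lemma J_neg[simp]: "J (- x) = - J x" using J_lin by (simp add: linear_neg)
lemma J_diff[simp]: "J (x - y) = J x - J y" using J_lin by (simp add: linear_diff)

definition "R' \<alpha> = a *\<^sub>R (\<alpha> e1 *\<^sub>R e2 - \<alpha> e2 *\<^sub>R e1)"
abbreviation "K' \<equiv> gc_K J R' \<sigma>"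

lemma K_eq: "in_Phi p \<Longrightarrow> K p = K' p"
  unfolding gc_K_def in_Phi_def R'_def using Rform by simp

lemma inPhi_br: "in_Phi p \<Longrightarrow> in_Phi q \<Longrightarrow> in_Phi (phi_br br p q)"
  unfolding in_Phi_def phi_br_def ad_t_def
proof simp
  assume p: "linear (snd p)" and q: "linear (snd q)"
  have l1: "linear (\<lambda>w. snd q (br (fst p) w))" using linear_compose[OF br_linr q] by (simp add: o_def)
  have l2: "linear (\<lambda>w. snd p (br (fst q) w))" using linear_compose[OF br_linr p] by (simp add: o_def)
  show "linear (\<lambda>w. snd p (br (fst q) w) - snd q (br (fst p) w))"
    using linear_compose_sub[OF l2 l1] .
qed

lemma nij_eq: assumes x: "in_Phi x" and y: "in_Phi y"
  shows "nijenhuis br K x y = nijenhuis br K' x y"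
proof -
  have kx: "K x = K' x" and ky: "K y = K' y" using K_eq x y by blast+
  have i1: "in_Phi (phi_br br (K x) y)" using inPhi_br Kin x y by blast
  have i2: "in_Phi (phi_br br x (K y))" using inPhi_br Kin x y by blast
  have i3: "in_Phi (phi_br br x y)" using inPhi_br x y by blast
  have t1: "K (phi_br br (K x) y) = K' (phi_br br (K' x) y)" using K_eq[OF i1] kx by simp
  have t2: "K (phi_br br x (K y)) = K' (phi_br br x (K' y))" using K_eq[OF i2] ky by simp
  have t3: "K (K (phi_br br x y)) = K' (K' (phi_br br x y))"
    using K_eq[OF Kin[OF i3]] K_eq[OF i3] by simp
  show ?thesis unfolding nijenhuis_def using kx ky t1 t2 t3 by simp
qed

lemma Nz: "in_Phi x \<Longrightarrow> in_Phi y \<Longrightarrow> nijenhuis br K' x y = phi_zero"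
  using nij_eq Knij by simp

lemmas nij_simps = nijenhuis_def phi_add_def phi_neg_def phi_scale_def phi_br_def ad_t_def gc_K_def R'_def sigF Je1 Je2 Je3 Je4

lemma inPhi_g: "in_Phi (0, g1)" "in_Phi (0, g2)" "in_Phi (0, g3)" "in_Phi (0, g4)"
  unfolding in_Phi_def using glin by simp_all
lemma inPhi_0: "in_Phi (u, \<lambda>w. 0)"
  unfolding in_Phi_def snd_conv by (rule linear_zero)


lemma NzA: "g3 (fst (nijenhuis br K' (0, g1) (0, g2))) = 0 \<and> g4 (fst (nijenhuis br K' (0, g1) (0, g2))) = 0"
  using Nz[OF inPhi_g(1) inPhi_g(2)] by (simp add: phi_zero_def)
lemma NzB: "snd (nijenhuis br K' (0, g2) (0, g3)) e3 = 0 \<and> snd (nijenhuis br K' (0, g2) (0, g3)) e4 = 0"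
  using Nz[OF inPhi_g(2) inPhi_g(3)] by (simp add: phi_zero_def)
lemma NzC: "snd (nijenhuis br K' (0, g1) (0, g3)) e3 = 0 \<and> snd (nijenhuis br K' (0, g1) (0, g3)) e4 = 0"
  using Nz[OF inPhi_g(1) inPhi_g(3)] by (simp add: phi_zero_def)
lemma NzD: "g1 (fst (nijenhuis br K' (e1, \<lambda>w. 0) (e3, \<lambda>w. 0))) = 0"
  using Nz[OF inPhi_0 inPhi_0] by (simp add: phi_zero_def)
lemma NzE: "g1 (fst (nijenhuis br K' (e1, \<lambda>w. 0) (e4, \<lambda>w. 0))) = 0"
  using Nz[OF inPhi_0 inPhi_0] by (simp add: phi_zero_def)


lemma brcond:
  "g3 (br e1 e2) = 0" "g4 (br e1 e2) = 0"
  "g3 (br e1 e4) = - g4 (br e1 e3)" "g4 (br e1 e4) = g3 (br e1 e3)"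
  "g3 (br e2 e4) = - g4 (br e2 e3)" "g4 (br e2 e4) = g3 (br e2 e3)"
  "g2 (br e2 e3) = - g1 (br e1 e3)" "g2 (br e2 e4) = - g1 (br e1 e4)"
proof -
  have A: "(a = 0 \<or> g3 (br e1 e2) = 0) \<and> (a = 0 \<or> g4 (br e1 e2) = 0)"
    using NzA by (simp add: nij_simps)
  have B: "a * g4 (br e1 e3) + a * g3 (br e1 e4) = 0 \<and> (a = 0 \<or> g4 (br e1 e4) = g3 (br e1 e3))"
    using NzB by (simp add: nij_simps)
  have C: "- (a * g4 (br e2 e3)) = a * g3 (br e2 e4) \<and> (a = 0 \<or> g3 (br e2 e3) = g4 (br e2 e4))"
    using NzC by (simp add: nij_simps)
  have D: "- (a * (c * g1 (br e1 e3))) = a * (c * g2 (br e2 e3))"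
    using NzD by (simp add: nij_simps)
  have E: "- (a * (c * g1 (br e1 e4))) = a * (c * g2 (br e2 e4))"
    using NzE by (simp add: nij_simps)
  have ac0: "a * c \<noteq> 0" using a_nz c_nz by simp
  show "g3 (br e1 e2) = 0" "g4 (br e1 e2) = 0" using A a_nz by auto
  have "a * (g4 (br e1 e3) + g3 (br e1 e4)) = 0" using B by (simp add: algebra_simps)
  then show "g3 (br e1 e4) = - g4 (br e1 e3)" using a_nz by simp
  show "g4 (br e1 e4) = g3 (br e1 e3)" using B a_nz by auto
  have "a * (g4 (br e2 e3) + g3 (br e2 e4)) = 0" using C by (simp add: algebra_simps)
  then show "g3 (br e2 e4) = - g4 (br e2 e3)" using a_nz by simp
  show "g4 (br e2 e4) = g3 (br e2 e3)" using C a_nz by auto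
  have "(a * c) * (g1 (br e1 e3) + g2 (br e2 e3)) = 0" using D by (simp add: algebra_simps)
  then show "g2 (br e2 e3) = - g1 (br e1 e3)" using ac0 by simp
  have "(a * c) * (g1 (br e1 e4) + g2 (br e2 e4)) = 0" using E by (simp add: algebra_simps)
  then show "g2 (br e2 e4) = - g1 (br e1 e4)" using ac0 by simp
qed

lemma bracket_ex: "\<exists>a1 a2 b1 b2 b3 b4 x1 x2 y1 y2 p1 p2 q1 q2 r1 r2.
         bracket_form br e1 e2 e3 e4 a1 a2 b1 b2 b3 b4 x1 x2 y1 y2 p1 p2 q1 q2 r1 r2"
proof -
  let ?a1 = "g1 (br e1 e2)" and ?a2 = "g2 (br e1 e2)"
  let ?b1 = "g1 (br e3 e4)" and ?b2 = "g2 (br e3 e4)" and ?b3 = "g3 (br e3 e4)" and ?b4 = "g4 (br e3 e4)"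
  let ?x1 = "g3 (br e1 e3)" and ?y1 = "- g4 (br e1 e3)" and ?p1 = "- g1 (br e1 e3)" and ?r1 = "- g2 (br e1 e3)"
  let ?p2 = "- g1 (br e1 e4)" and ?r2 = "- g2 (br e1 e4)"
  let ?x2 = "g3 (br e2 e3)" and ?y2 = "- g4 (br e2 e3)" and ?q1 = "- g1 (br e2 e3)" and ?q2 = "- g1 (br e2 e4)"
  have "bracket_form br e1 e2 e3 e4 ?a1 ?a2 ?b1 ?b2 ?b3 ?b4 ?x1 ?x2 ?y1 ?y2 ?p1 ?p2 ?q1 ?q2 ?r1 ?r2"
    unfolding bracket_form_def
    by (intro conjI; rule vec_eq; simp add: brcond)
  then show ?thesis by blast
qed


lemma lin_basis0: "linear f \<Longrightarrow> f e1 = 0 \<Longrightarrow> f e2 = 0 \<Longrightarrow> f e3 = 0 \<Longrightarrow> f e4 = 0 \<Longrightarrow> f u = 0"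
proof -
  assume l: "linear f" and z: "f e1 = 0" "f e2 = 0" "f e3 = 0" "f e4 = 0"
  have "f u = f (g1 u *\<^sub>R e1 + g2 u *\<^sub>R e2 + g3 u *\<^sub>R e3 + g4 u *\<^sub>R e4)" using coords[of u] by metis
  also have "\<dots> = 0" using l z by (simp add: linear_add linear_scale)
  finally show ?thesis .
qed


lemma jacobi_equiv:
  fixes br' :: "'a \<Rightarrow> 'a \<Rightarrow> 'a"
  assumes bil: "bilinear br'" and alt: "\<And>u. br' u u = 0"
    and bf: "bracket_form br' e1 e2 e3 e4 a1 a2 b1 b2 b3 b4 x1 x2 y1 y2 p1 p2 q1 q2 r1 r2"
  shows "jacobi_identity br' \<longleftrightarrow> jacobi_system a1 a2 b1 b2 b3 b4 x1 x2 y1 y2 p1 p2 q1 q2 r1 r2"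
proof -
  note eqs = bf[unfolded bracket_form_def]
  note E = eqs[THEN conjunct1] eqs[THEN conjunct2, THEN conjunct1]
    eqs[THEN conjunct2, THEN conjunct2, THEN conjunct1]
    eqs[THEN conjunct2, THEN conjunct2, THEN conjunct2, THEN conjunct1]
    eqs[THEN conjunct2, THEN conjunct2, THEN conjunct2, THEN conjunct2, THEN conjunct1]
    eqs[THEN conjunct2, THEN conjunct2, THEN conjunct2, THEN conjunct2, THEN conjunct2]
  have sk: "br' e2 e1 = - br' e1 e2" "br' e3 e1 = - br' e1 e3" "br' e4 e1 = - br' e1 e4"
    "br' e3 e2 = - br' e2 e3" "br' e4 e2 = - br' e2 e4" "br' e4 e3 = - br' e3 e4"
    using bil_skew[OF bil alt] by blast+
  let ?J = "jac br'"
  have c123_1: "g1 (?J e1 e2 e3) = a1*p1 + a2*q1 - p1*x2 + p2*y2 + q1*x1 - q2*y1"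
    unfolding jac_def by (simp add: bil_simps E sk bil alt)
  have c123_2: "g2 (?J e1 e2 e3) = a1*r1 - a2*p1 - p1*x1 + p2*y1 - r1*x2 + r2*y2"
    unfolding jac_def by (simp add: bil_simps E sk bil alt)
  have c123_3: "g3 (?J e1 e2 e3) = -a1*x1 - a2*x2"
    unfolding jac_def by (simp add: bil_simps E sk bil alt)
  have c123_4: "g4 (?J e1 e2 e3) = a1*y1 + a2*y2"
    unfolding jac_def by (simp add: bil_simps E sk bil alt)
  have c124_1: "g1 (?J e1 e2 e4) = a1*p2 + a2*q2 - p1*y2 - p2*x2 + q1*y1 + q2*x1"
    unfolding jac_def by (simp add: bil_simps E sk bil alt)
  have c124_2: "g2 (?J e1 e2 e4) = a1*r2 - a2*p2 - p1*y1 - p2*x1 - r1*y2 - r2*x2"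
    unfolding jac_def by (simp add: bil_simps E sk bil alt)
  have c124_3: "g3 (?J e1 e2 e4) = -a1*y1 - a2*y2"
    unfolding jac_def by (simp add: bil_simps E sk bil alt)
  have c124_4: "g4 (?J e1 e2 e4) = -a1*x1 - a2*x2"
    unfolding jac_def by (simp add: bil_simps E sk bil alt)
  have c134_1: "g1 (?J e1 e3 e4) = a1*b2 - 2*b1*x1 - b3*p1 - b4*p2 + q1*r2 - q2*r1"
    unfolding jac_def by (simp add: bil_simps E sk bil alt)
  have c134_2: "g2 (?J e1 e3 e4) = a2*b2 - 2*b2*x1 - b3*r1 - b4*r2 - 2*p1*r2 + 2*p2*r1"
    unfolding jac_def by (simp add: bil_simps E sk bil alt)
  have c134_3: "g3 (?J e1 e3 e4) = - b3*x1 + b4*y1 + p1*y1 - p2*x1 + r1*y2 - r2*x2"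
    unfolding jac_def by (simp add: bil_simps E sk bil alt)
  have c134_4: "g4 (?J e1 e3 e4) = - b3*y1 - b4*x1 + p1*x1 + p2*y1 + r1*x2 + r2*y2"
    unfolding jac_def by (simp add: bil_simps E sk bil alt)
  have c234_1: "g1 (?J e2 e3 e4) = - a1*b1 - 2*b1*x2 - b3*q1 - b4*q2 + 2*p1*q2 - 2*p2*q1"
    unfolding jac_def by (simp add: bil_simps E sk bil alt)
  have c234_2: "g2 (?J e2 e3 e4) = - a2*b1 - 2*b2*x2 + b3*p1 + b4*p2 - q1*r2 + q2*r1"
    unfolding jac_def by (simp add: bil_simps E sk bil alt)
  have c234_3: "g3 (?J e2 e3 e4) = - b3*x2 + b4*y2 - p1*y2 + p2*x2 + q1*y1 - q2*x1"
    unfolding jac_def by (simp add: bil_simps E sk bil alt)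
  have c234_4: "g4 (?J e2 e3 e4) = - b3*y2 - b4*x2 - p1*x2 - p2*y2 + q1*x1 + q2*y1"
    unfolding jac_def by (simp add: bil_simps E sk bil alt)
  have jid: "jacobi_identity br' \<longleftrightarrow> (\<forall>u v w. ?J u v w = 0)"
    unfolding jacobi_identity_def jac_def by simp
  let ?base = "?J e1 e2 e3 = 0 \<and> ?J e1 e2 e4 = 0 \<and> ?J e1 e3 e4 = 0 \<and> ?J e2 e3 e4 = 0"
  have base_iff: "?base \<longleftrightarrow> jacobi_system a1 a2 b1 b2 b3 b4 x1 x2 y1 y2 p1 p2 q1 q2 r1 r2"
  proof
    assume b: ?base
    have z: "g1 (?J e1 e2 e3) = 0" "g2 (?J e1 e2 e3) = 0" "g3 (?J e1 e2 e3) = 0" "g4 (?J e1 e2 e3) = 0"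
      "g1 (?J e1 e2 e4) = 0" "g2 (?J e1 e2 e4) = 0" "g3 (?J e1 e2 e4) = 0" "g4 (?J e1 e2 e4) = 0"
      "g1 (?J e1 e3 e4) = 0" "g2 (?J e1 e3 e4) = 0" "g3 (?J e1 e3 e4) = 0" "g4 (?J e1 e3 e4) = 0"
      "g1 (?J e2 e3 e4) = 0" "g2 (?J e2 e3 e4) = 0" "g3 (?J e2 e3 e4) = 0" "g4 (?J e2 e3 e4) = 0"
      using b by simp_all
    note zz = z[unfolded c123_1 c123_2 c123_3 c123_4 c124_1 c124_2 c124_3 c124_4
       c134_1 c134_2 c134_3 c134_4 c234_1 c234_2 c234_3 c234_4]
    show "jacobi_system a1 a2 b1 b2 b3 b4 x1 x2 y1 y2 p1 p2 q1 q2 r1 r2"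
      unfolding jacobi_system_def using zz by (intro conjI; linarith)
  next
    assume js: "jacobi_system a1 a2 b1 b2 b3 b4 x1 x2 y1 y2 p1 p2 q1 q2 r1 r2"
    note j = js[unfolded jacobi_system_def]
    have "?J e1 e2 e3 = 0" using j by (intro vec_eq; simp add: c123_1 c123_2 c123_3 c123_4; linarith)
    moreover have "?J e1 e2 e4 = 0" using j by (intro vec_eq; simp add: c124_1 c124_2 c124_3 c124_4; linarith)
    moreover have "?J e1 e3 e4 = 0" using j by (intro vec_eq; simp add: c134_1 c134_2 c134_3 c134_4; linarith)
    moreover have "?J e2 e3 e4 = 0" using j by (intro vec_eq; simp add: c234_1 c234_2 c234_3 c234_4; linarith)
    ultimately show ?base by blast
  qed
  have ext: "\<forall>u v w. ?J u v w = 0" if b: ?base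
  proof -
    have p: "jac br' v u w = 0 \<and> jac br' v w u = 0 \<and> jac br' w u v = 0 \<and> jac br' u w v = 0 \<and> jac br' w v u = 0"
      if "jac br' u v w = 0" for u v w using jac_perm0[OF bil alt that] .
    have all64: "\<forall>x\<in>{e1,e2,e3,e4}. \<forall>y\<in>{e1,e2,e3,e4}. \<forall>z\<in>{e1,e2,e3,e4}. ?J x y z = 0"
      using b p[of e1 e2 e3] p[of e1 e2 e4] p[of e1 e3 e4] p[of e2 e3 e4] jac_rep'[OF bil alt]
      by auto
    have s2: "?J x y w = 0" if "x \<in> {e1,e2,e3,e4}" "y \<in> {e1,e2,e3,e4}" for x y w
    proof -
      have "(\<lambda>w. ?J w x y) w = 0"
        by (rule lin_basis0[OF jac_lin1[OF bil]]) (use all64 that in auto)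
      then show ?thesis using jac_cyc[of br' x y w] jac_cyc[of br' y w x] by simp
    qed
    have s3: "?J x v w = 0" if "x \<in> {e1,e2,e3,e4}" for x v w
    proof -
      have q: "?J y w x = 0" if "y \<in> {e1,e2,e3,e4}" for y
        using s2[OF \<open>x \<in> {e1,e2,e3,e4}\<close> that, of w] jac_cyc[of br' x y w] by simp
      have "(\<lambda>v. ?J v w x) v = 0"
        by (rule lin_basis0[OF jac_lin1[OF bil]]) (simp_all add: q)
      then show ?thesis using jac_cyc[of br' x v w] by simp
    qed
    show ?thesis
    proof (intro allI)
      fix u v w
      show "?J u v w = 0"
        using lin_basis0[OF jac_lin1[OF bil], of v w u] s3 by auto
    qed
  qed
  have "?base" if "jacobi_identity br'" using that jid by blast
  then show ?thesis using jid ext base_iff by blast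
qed


lemma dual_eq: assumes "linear f" "f e1 = 0" "f e2 = 0" "f e3 = 0" "f e4 = 0" shows "f = (\<lambda>x. 0)"
proof
  fix x show "f x = 0" using lin_basis0[OF assms] .
qed

lemma dual0: "dual_basis [e1, e2, e3, e4] 0 = g1"
  unfolding dual_basis_def
proof (rule the_equality)
  show "linear g1 \<and> (\<forall>j<length [e1, e2, e3, e4]. g1 ([e1, e2, e3, e4] ! j) = (if j = 0 then 1 else 0))"
    unfolding len4 all4 using glin by simp
next
  fix f :: "'a \<Rightarrow> real" assume "linear f \<and> (\<forall>j<length [e1, e2, e3, e4]. f ([e1, e2, e3, e4] ! j) = (if j = 0 then 1 else 0))"
  then have f: "linear f" "f e1 = 1" "f e2 = 0" "f e3 = 0" "f e4 = 0" unfolding len4 all4 by simp_all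
  have "(\<lambda>x. f x - g1 x) = (\<lambda>x. 0)"
    by (rule dual_eq) (use linear_compose_sub[OF f(1) glin(1)] f in simp_all)
  then show "f = g1"
  proof -
    assume h: "(\<lambda>x. f x - g1 x) = (\<lambda>x. 0)"
    show "f = g1"
    proof
      fix x show "f x = g1 x" using fun_cong[OF h, of x] by simp
    qed
  qed
qed

lemma dual1: "dual_basis [e1, e2, e3, e4] 1 = g2"
  unfolding dual_basis_def
proof (rule the_equality)
  show "linear g2 \<and> (\<forall>j<length [e1, e2, e3, e4]. g2 ([e1, e2, e3, e4] ! j) = (if j = 1 then 1 else 0))"
    unfolding len4 all4 using glin by simp
next
  fix f :: "'a \<Rightarrow> real" assume "linear f \<and> (\<forall>j<length [e1, e2, e3, e4]. f ([e1, e2, e3, e4] ! j) = (if j = 1 then 1 else 0))"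
  then have f: "linear f" "f e1 = 0" "f e2 = 1" "f e3 = 0" "f e4 = 0" unfolding len4 all4 by simp_all
  have "(\<lambda>x. f x - g2 x) = (\<lambda>x. 0)"
    by (rule dual_eq) (use linear_compose_sub[OF f(1) glin(2)] f in simp_all)
  then show "f = g2"
  proof -
    assume h: "(\<lambda>x. f x - g2 x) = (\<lambda>x. 0)"
    show "f = g2"
    proof
      fix x show "f x = g2 x" using fun_cong[OF h, of x] by simp
    qed
  qed
qed

lemma basis4: "is_basis_of [e1, e2, e3, e4] UNIV"
  unfolding is_basis_of_def
proof (intro conjI allI impI)
  show "set [e1, e2, e3, e4] \<subseteq> UNIV" by simp
  show "span (set [e1, e2, e3, e4]) = UNIV"
  proof (rule set_eqI, rule iffI)
    fix w :: 'a
    assume "w \<in> UNIV"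
    have "g1 w *\<^sub>R e1 + g2 w *\<^sub>R e2 + g3 w *\<^sub>R e3 + g4 w *\<^sub>R e4 \<in> span (set [e1, e2, e3, e4])"
      by (intro span_add span_scale span_base) simp_all
    then show "w \<in> span (set [e1, e2, e3, e4])" using coords[of w] by metis
  qed simp
next
  fix c :: "nat \<Rightarrow> real" and i :: nat
  assume s: "(\<Sum>i<length [e1, e2, e3, e4]. c i *\<^sub>R [e1, e2, e3, e4] ! i) = 0" and i: "i < length [e1, e2, e3, e4]"
  have "c 0 *\<^sub>R e1 + c 1 *\<^sub>R e2 + c 2 *\<^sub>R e3 + c 3 *\<^sub>R J e3 = 0"
    using s e4def unfolding len4 sum4 by simp
  then have "c 0 = 0 \<and> c 1 = 0 \<and> c 2 = 0 \<and> c 3 = 0" using ind4[OF e3V e3nz] by blast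
  then show "c i = 0" using i unfolding len4 by (auto simp: less_Suc_eq numeral_eq_Suc)
qed

lemma jac_stmt: "\<forall>a1 a2 b1 b2 b3 b4 x1 x2 y1 y2 p1 p2 q1 q2 r1 r2 (br' :: 'a \<Rightarrow> 'a \<Rightarrow> 'a).
         bilinear br' \<and> (\<forall>u. br' u u = 0) \<and>
         bracket_form br' e1 e2 e3 e4 a1 a2 b1 b2 b3 b4 x1 x2 y1 y2 p1 p2 q1 q2 r1 r2 \<longrightarrow>
         (jacobi_identity br' \<longleftrightarrow> jacobi_system a1 a2 b1 b2 b3 b4 x1 x2 y1 y2 p1 p2 q1 q2 r1 r2)"
proof (intro allI impI)
  fix a1 a2 b1 b2 b3 b4 x1 x2 y1 y2 p1 p2 q1 q2 r1 r2 and br' :: "'a \<Rightarrow> 'a \<Rightarrow> 'a"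
  assume h: "bilinear br' \<and> (\<forall>u. br' u u = 0) \<and>
         bracket_form br' e1 e2 e3 e4 a1 a2 b1 b2 b3 b4 x1 x2 y1 y2 p1 p2 q1 q2 r1 r2"
  then have h1: "bilinear br'" and h2: "\<And>u. br' u u = 0"
    and h3: "bracket_form br' e1 e2 e3 e4 a1 a2 b1 b2 b3 b4 x1 x2 y1 y2 p1 p2 q1 q2 r1 r2" by simp_all
  show "jacobi_identity br' \<longleftrightarrow> jacobi_system a1 a2 b1 b2 b3 b4 x1 x2 y1 y2 p1 p2 q1 q2 r1 r2"
    by (rule jacobi_equiv[OF h1 h2 h3])
qed

lemma fb_main: "\<exists>lam a. a \<noteq> 0 \<and>
         J e1 = lam *\<^sub>R e1 \<and> J e2 = lam *\<^sub>R e2 \<and> J e3 = e4 \<and> J e4 = - e3 \<and>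
         (\<forall>\<alpha>. linear \<alpha> \<longrightarrow> R \<alpha> = a *\<^sub>R wedge_sharp e1 e2 \<alpha>) \<and>
         (\<forall>u. \<sigma> u = (\<lambda>w. (1 + lam\<^sup>2) / a *
                 wedge_flat (dual_basis [e1, e2, e3, e4] 0) (dual_basis [e1, e2, e3, e4] 1) u w))"
proof (intro exI conjI allI impI)
  show "a \<noteq> 0" by (rule a_nz)
  show "J e1 = lam *\<^sub>R e1" by (rule Je1)
  show "J e2 = lam *\<^sub>R e2" by (rule Je2)
  show "J e3 = e4" by (rule Je3)
  show "J e4 = - e3" by (rule Je4)
  fix \<alpha> :: "'a \<Rightarrow> real" assume "linear \<alpha>"
  then show "R \<alpha> = a *\<^sub>R wedge_sharp e1 e2 \<alpha>" using Rform unfolding wedge_sharp_def by simp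
next
  fix u
  have cc: "c = (1 + lam\<^sup>2) / a" using ac a_nz by (simp add: field_simps)
  show "\<sigma> u = (\<lambda>w. (1 + lam\<^sup>2) / a * wedge_flat (dual_basis [e1, e2, e3, e4] 0) (dual_basis [e1, e2, e3, e4] 1) u w)"
    unfolding dual0 dual1 wedge_flat_def using sigF cc by auto
qed

end

context gc4
begin

lemma part3:
  assumes b2: "is_basis_of [e1, e2] (imR R)" and e3k: "e3 \<in> ker_sigma \<sigma>" and e3nz: "e3 \<noteq> 0" and e4: "e4 = J e3"
  shows "is_basis_of [e1, e2, e3, e4] UNIV \<and>
      (\<exists>lam a. a \<noteq> 0 \<and>
         J e1 = lam *\<^sub>R e1 \<and> J e2 = lam *\<^sub>R e2 \<and> J e3 = e4 \<and> J e4 = - e3 \<and>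
         (\<forall>\<alpha>. linear \<alpha> \<longrightarrow> R \<alpha> = a *\<^sub>R wedge_sharp e1 e2 \<alpha>) \<and>
         (\<forall>u. \<sigma> u = (\<lambda>w. (1 + lam\<^sup>2) / a *
                 wedge_flat (dual_basis [e1, e2, e3, e4] 0) (dual_basis [e1, e2, e3, e4] 1) u w))) \<and>
      (\<exists>a1 a2 b1 b2 b3 b4 x1 x2 y1 y2 p1 p2 q1 q2 r1 r2.
         bracket_form br e1 e2 e3 e4 a1 a2 b1 b2 b3 b4 x1 x2 y1 y2 p1 p2 q1 q2 r1 r2) \<and>
      (\<forall>a1 a2 b1 b2 b3 b4 x1 x2 y1 y2 p1 p2 q1 q2 r1 r2 (br' :: 'g \<Rightarrow> 'g \<Rightarrow> 'g).
         bilinear br' \<and> (\<forall>u. br' u u = 0) \<and>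
         bracket_form br' e1 e2 e3 e4 a1 a2 b1 b2 b3 b4 x1 x2 y1 y2 p1 p2 q1 q2 r1 r2 \<longrightarrow>
         (jacobi_identity br' \<longleftrightarrow> jacobi_system a1 a2 b1 b2 b3 b4 x1 x2 y1 y2 p1 p2 q1 q2 r1 r2))"
proof -
  have bb: "set [e1, e2] \<subseteq> imR R" "span (set [e1, e2]) = imR R"
    "\<And>c. (\<Sum>i<length [e1, e2]. c i *\<^sub>R [e1, e2] ! i) = 0 \<longrightarrow> (\<forall>i<length [e1, e2]. c i = 0)"
    using b2 unfolding is_basis_of_def by blast+
  have ind: "x = 0 \<and> y = 0" if "x *\<^sub>R e1 + y *\<^sub>R e2 = 0" for x y
  proof -
    have "(\<Sum>i<length [e1, e2]. (\<lambda>i. if i = 0 then x else y) i *\<^sub>R [e1, e2] ! i) = 0"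
      unfolding len2 sum2 using that by simp
    with bb(3)[of "\<lambda>i. if i = 0 then x else y"] have h: "\<forall>i<length [e1, e2]. (if i = 0 then x else y) = 0" by (rule mp)
    have "x = 0" using h[rule_format, of 0] by (simp add: len2)
    moreover have "y = 0" using h[rule_format, of 1] by (simp add: len2)
    ultimately show ?thesis by simp
  qed
  have hbi: "hb br J R \<sigma> e1 e2"
    by (intro hb.intro gc4_axioms hb_axioms.intro) (use bb ind in auto)
  interpret H: hb br J R \<sigma> e1 e2 by (rule hbi)
  have e3V: "e3 \<in> H.V" using e3k H.ker_V by simp
  have fbi: "fb br J R \<sigma> e1 e2 e3 e4"
    by (intro fb.intro hbi fb_axioms.intro e3V e3nz e4)
  interpret F: fb br J R \<sigma> e1 e2 e3 e4 by (rule fbi)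
  show ?thesis by (intro conjI F.basis4 F.fb_main F.bracket_ex F.jac_stmt)
qed

lemma part3': "\<forall>e1 e2 e3 e4. is_basis_of [e1, e2] (imR R) \<and> e3 \<in> ker_sigma \<sigma> \<and> e3 \<noteq> 0 \<and> e4 = J e3 \<longrightarrow>
      is_basis_of [e1, e2, e3, e4] UNIV \<and>
      (\<exists>lam a. a \<noteq> 0 \<and>
         J e1 = lam *\<^sub>R e1 \<and> J e2 = lam *\<^sub>R e2 \<and> J e3 = e4 \<and> J e4 = - e3 \<and>
         (\<forall>\<alpha>. linear \<alpha> \<longrightarrow> R \<alpha> = a *\<^sub>R wedge_sharp e1 e2 \<alpha>) \<and>
         (\<forall>u. \<sigma> u = (\<lambda>w. (1 + lam\<^sup>2) / a *
                 wedge_flat (dual_basis [e1, e2, e3, e4] 0) (dual_basis [e1, e2, e3, e4] 1) u w))) \<and>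
      (\<exists>a1 a2 b1 b2 b3 b4 x1 x2 y1 y2 p1 p2 q1 q2 r1 r2.
         bracket_form br e1 e2 e3 e4 a1 a2 b1 b2 b3 b4 x1 x2 y1 y2 p1 p2 q1 q2 r1 r2) \<and>
      (\<forall>a1 a2 b1 b2 b3 b4 x1 x2 y1 y2 p1 p2 q1 q2 r1 r2 (br' :: 'g \<Rightarrow> 'g \<Rightarrow> 'g).
         bilinear br' \<and> (\<forall>u. br' u u = 0) \<and>
         bracket_form br' e1 e2 e3 e4 a1 a2 b1 b2 b3 b4 x1 x2 y1 y2 p1 p2 q1 q2 r1 r2 \<longrightarrow>
         (jacobi_identity br' \<longleftrightarrow> jacobi_system a1 a2 b1 b2 b3 b4 x1 x2 y1 y2 p1 p2 q1 q2 r1 r2))"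
  by (intro allI impI, elim conjE, rule part3, assumption+)

lemma part12: "imR R \<inter> ker_sigma \<sigma> = {0} \<and> {h + p | h p. h \<in> imR R \<and> p \<in> ker_sigma \<sigma>} = UNIV"
proof -
  obtain B where B: "B \<subseteq> imR R" "independent B" "imR R \<subseteq> span B" "card B = dim (imR R)"
    using basis_exists by blast
  then have "card B = 2" using type1 unfolding gc_type1_def by simp
  then obtain x y where xy: "x \<noteq> y" "B = {x, y}" by (meson card_2_iff)
  have hbi: "hb br J R \<sigma> x y"
  proof (intro hb.intro gc4_axioms hb_axioms.intro)
    show "x \<in> imR R" "y \<in> imR R" "imR R \<subseteq> span {x, y}" using B xy by auto
    fix a b assume "a *\<^sub>R x + b *\<^sub>R y = 0"
    then show "a = 0 \<and> b = 0" using indep_pair[of x y a b] B xy by blast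
  qed
  interpret H: hb br J R \<sigma> x y by (rule hbi)
  have 1: "imR R \<inter> ker_sigma \<sigma> = {0}"
  proof
    show "imR R \<inter> ker_sigma \<sigma> \<subseteq> {0}"
    proof
      fix u assume u: "u \<in> imR R \<inter> ker_sigma \<sigma>"
      then have "u \<in> H.V" using H.ker_V by blast
      then show "u \<in> {0}" using H.h_cap u unfolding H.V_def by blast
    qed
    have "0 \<in> imR R" unfolding imR_def using R0 zero_lin by (metis image_eqI mem_Collect_eq)
    moreover have "0 \<in> ker_sigma \<sigma>" unfolding ker_sigma_def by (simp add: fun_eq_iff)
    ultimately show "{0} \<subseteq> imR R \<inter> ker_sigma \<sigma>" by blast
  qed
  have 2: "{h + p | h p. h \<in> imR R \<and> p \<in> ker_sigma \<sigma>} = UNIV"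
  proof (rule set_eqI, rule iffI)
    fix w :: 'g
    have "w = H.hw w + (w - H.hw w)" by simp
    moreover have "H.hw w \<in> imR R" by (rule H.hw_in)
    moreover have "w - H.hw w \<in> ker_sigma \<sigma>" using H.hw_V H.ker_V by simp
    ultimately show "w \<in> {h + p | h p. h \<in> imR R \<and> p \<in> ker_sigma \<sigma>}" by blast
  qed simp
  show ?thesis using 1 2 by blast
qed

end

theorem proposition2p1:
  fixes br :: "'g::euclidean_space \<Rightarrow> 'g \<Rightarrow> 'g"
    and J :: "'g \<Rightarrow> 'g"
    and R :: "('g \<Rightarrow> real) \<Rightarrow> 'g"
    and \<sigma> :: "'g \<Rightarrow> ('g \<Rightarrow> real)"
  assumes dim4: "DIM('g) = 4"
    and lie: "lie_algebra br"
    and gcs: "gen_complex_triple br J R \<sigma>"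
    and type1: "gc_type1 R"
  shows "imR R \<inter> ker_sigma \<sigma> = {0} \<and> {h + p | h p. h \<in> imR R \<and> p \<in> ker_sigma \<sigma>} = UNIV \<and>
    (\<forall>e1 e2 e3 e4. is_basis_of [e1, e2] (imR R) \<and> e3 \<in> ker_sigma \<sigma> \<and> e3 \<noteq> 0 \<and> e4 = J e3 \<longrightarrow>
      is_basis_of [e1, e2, e3, e4] UNIV \<and>
      (\<exists>lam a. a \<noteq> 0 \<and>
         J e1 = lam *\<^sub>R e1 \<and> J e2 = lam *\<^sub>R e2 \<and> J e3 = e4 \<and> J e4 = - e3 \<and>
         (\<forall>\<alpha>. linear \<alpha> \<longrightarrow> R \<alpha> = a *\<^sub>R wedge_sharp e1 e2 \<alpha>) \<and>
         (\<forall>u. \<sigma> u = (\<lambda>w. (1 + lam\<^sup>2) / a *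
                 wedge_flat (dual_basis [e1, e2, e3, e4] 0) (dual_basis [e1, e2, e3, e4] 1) u w))) \<and>
      (\<exists>a1 a2 b1 b2 b3 b4 x1 x2 y1 y2 p1 p2 q1 q2 r1 r2.
         bracket_form br e1 e2 e3 e4 a1 a2 b1 b2 b3 b4 x1 x2 y1 y2 p1 p2 q1 q2 r1 r2) \<and>
      (\<forall>a1 a2 b1 b2 b3 b4 x1 x2 y1 y2 p1 p2 q1 q2 r1 r2 (br' :: 'g \<Rightarrow> 'g \<Rightarrow> 'g).
         bilinear br' \<and> (\<forall>u. br' u u = 0) \<and>
         bracket_form br' e1 e2 e3 e4 a1 a2 b1 b2 b3 b4 x1 x2 y1 y2 p1 p2 q1 q2 r1 r2 \<longrightarrow>
         (jacobi_identity br' \<longleftrightarrow> jacobi_system a1 a2 b1 b2 b3 b4 x1 x2 y1 y2 p1 p2 q1 q2 r1 r2)))"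
proof -
  interpret G: gc4 br J R \<sigma> by (unfold_locales) (rule dim4 lie gcs type1)+
  note p12 = G.part12
  show ?thesis
    apply (intro conjI)
      apply (rule conjunct1[OF p12])
     apply (rule conjunct2[OF p12])
    apply (rule G.part3')
    done
qed

end
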